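(* Let $r\ge2$, $1\le d<r$ and $M\in\mathrm{rep}(K_r)$. (1) $M\in\mathrm{rep}_{\mathrm{proj}}(K_r,d)$ if and only if $\mathrm{Hom}_{K_r}(C(\mathfrak w),\sigma_{K_r}(M))=(0)$ for all $\mathfrak w\in\mathrm{Gr}_{r-d}(A_r)$. (2) $M\in\mathrm{rep}_{\mathrm{proj}}(K_r,r-1)$ if and only if $\sigma_{K_r}(M)\in\mathrm{EKP}(K_r)$. (3) $\sigma_{K_r}^{-1}(\mathrm{rep}_{\mathrm{proj}}(K_r,d))\subseteq\mathrm{rep}_{\mathrm{proj}}(K_r,r-1)$. In particular, $\mathrm{rep}_{\mathrm{proj}}(K_r,d)$ is stable under $\sigma_{K_r}^{-1}$.
   Context: $k$ is algebraically closed of arbitrary characteristic; vector spaces finite-dimensional. $K_r$ is the Kronecker quiver with arrows $\gamma_1,\dots,\gamma_r:1\to2$; $A_r=\bigoplus_ik\gamma_i$; for $M=(M_1,M_2,(M(\gamma_i))_i)\in\mathrm{rep}(K_r)$, $\psi_M:A_r\otimes_kM_1\to M_2$, $\gamma_i\otimes m\mapsto M(\gamma_i)(m)$, and $\psi_{M,\mathfrak v}$ is its restriction to $\mathfrak v\otimes_kM_1$. For $e\in\{1,\dots,r\}$, $\mathrm{rep}_{\mathrm{proj}}(K_r,e)$ is the full subcategory of those $M$ with $\psi_{M,\mathfrak v}$ injective for all $\mathfrak v\in\mathrm{Gr}_e(A_r)$ (the Grassmannian of $e$-dimensional subspaces); $\mathrm{EKP}(K_r)=\mathrm{rep}_{\mathrm{proj}}(K_r,1)$.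 For $\mathfrak w\in\mathrm{Gr}_{r-d}(A_r)$, $C(\mathfrak w)=(k,A_r/\mathfrak w)$ with $C(\mathfrak w)(\gamma_i)(\lambda)=\lambda\gamma_i+\mathfrak w$. The shift functor $\sigma_{K_r}$: identify $\psi_M$ with $M_1^r\to M_2$, $(m_i)\mapsto\sum_iM(\gamma_i)(m_i)$; then $\sigma_{K_r}(M)=(\ker\psi_M,M_1)$ with $\sigma_{K_r}(M)(\gamma_i)$ the restriction to $\ker\psi_M$ of the $i$-th projection $M_1^r\to M_1$ (on morphisms $f$: componentwise $f_1$ on $\ker\psi_M$ and $f_1$). Dually $\sigma_{K_r}^{-1}(M)=(M_2,\mathrm{coker}\,\varphi)$ where $\varphi:M_1\to M_2^r$, $m\mapsto(M(\gamma_i)(m))_i$, and $\sigma_{K_r}^{-1}(M)(\gamma_i)$ is the $i$-th inclusion $M_2\to M_2^r$ followed by the projection onto $\mathrm{coker}\,\varphi$. (These are the BGP reflection functors composed with the identification of $K_r$ with its opposite quiver.) *)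

theory Defs
  imports "HOL-Computational_Algebra.Polynomial"
begin

definition alg_closed :: "'k::field itself \<Rightarrow> bool" where
  "alg_closed _ \<longleftrightarrow> (\<forall>p::'k poly. degree p > 0 \<longrightarrow> (\<exists>x. poly p x = 0))"

section \<open>Vector spaces over a field k (explicit structures, so that quotients are available)\<close>

record ('k, 'v) vspace =
  vcarrier :: "'v set"
  vzero :: 'v
  vadd :: "'v \<Rightarrow> 'v \<Rightarrow> 'v"
  vsmult :: "'k \<Rightarrow> 'v \<Rightarrow> 'v"

inductive_set vspan :: "('k, 'v, 'z) vspace_scheme \<Rightarrow> 'v set \<Rightarrow> 'v set"
  for V :: "('k, 'v, 'z) vspace_scheme" and S :: "'v set" where
  span_zero: "vzero V \<in> vspan V S"
| span_gen: "x \<in> S \<Longrightarrow> x \<in> vspan V S"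
| span_add: "x \<in> vspan V S \<Longrightarrow> y \<in> vspan V S \<Longrightarrow> vadd V x y \<in> vspan V S"
| span_smult: "x \<in> vspan V S \<Longrightarrow> vsmult V a x \<in> vspan V S"

definition fd_vs :: "('k::field, 'v) vspace \<Rightarrow> bool" where
  "fd_vs V \<longleftrightarrow>
     vzero V \<in> vcarrier V \<and>
     (\<forall>x\<in>vcarrier V. \<forall>y\<in>vcarrier V. vadd V x y \<in> vcarrier V) \<and>
     (\<forall>a. \<forall>x\<in>vcarrier V. vsmult V a x \<in> vcarrier V) \<and>
     (\<forall>x\<in>vcarrier V. \<forall>y\<in>vcarrier V. \<forall>z\<in>vcarrier V.
        vadd V (vadd V x y) z = vadd V x (vadd V y z)) \<and>
     (\<forall>x\<in>vcarrier V. \<forall>y\<in>vcarrier V. vadd V x y = vadd V y x) \<and>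
     (\<forall>x\<in>vcarrier V. vadd V (vzero V) x = x) \<and>
     (\<forall>x\<in>vcarrier V. \<exists>y\<in>vcarrier V. vadd V x y = vzero V) \<and>
     (\<forall>x\<in>vcarrier V. vsmult V 1 x = x) \<and>
     (\<forall>a b. \<forall>x\<in>vcarrier V. vsmult V a (vsmult V b x) = vsmult V (a * b) x) \<and>
     (\<forall>a b. \<forall>x\<in>vcarrier V. vsmult V (a + b) x = vadd V (vsmult V a x) (vsmult V b x)) \<and>
     (\<forall>a. \<forall>x\<in>vcarrier V. \<forall>y\<in>vcarrier V.
        vsmult V a (vadd V x y) = vadd V (vsmult V a x) (vsmult V a y)) \<and>
     (\<exists>B. finite B \<and> B \<subseteq> vcarrier V \<and> vspan V B = vcarrier V)"

definition subspace_of :: "('k, 'v) vspace \<Rightarrow> 'v set \<Rightarrow> bool" where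
  "subspace_of V U \<longleftrightarrow> U \<subseteq> vcarrier V \<and> vzero V \<in> U \<and>
     (\<forall>x\<in>U. \<forall>y\<in>U. vadd V x y \<in> U) \<and> (\<forall>a. \<forall>x\<in>U. vsmult V a x \<in> U)"

definition lin_indep :: "('k, 'v) vspace \<Rightarrow> 'v set \<Rightarrow> bool" where
  "lin_indep V B \<longleftrightarrow> (\<forall>b\<in>B. b \<notin> vspan V (B - {b}))"

definition Gr :: "('k, 'v) vspace \<Rightarrow> nat \<Rightarrow> 'v set set" where
  "Gr V e = {U. subspace_of V U \<and>
      (\<exists>B. finite B \<and> card B = e \<and> B \<subseteq> U \<and> lin_indep V B \<and> vspan V B = U)}"

definition lin_map :: "('k, 'v) vspace \<Rightarrow> ('k, 'w) vspace \<Rightarrow> ('v \<Rightarrow> 'w) \<Rightarrow> bool" where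
  "lin_map V W f \<longleftrightarrow> (\<forall>x\<in>vcarrier V. f x \<in> vcarrier W) \<and>
     (\<forall>x\<in>vcarrier V. \<forall>y\<in>vcarrier V. f (vadd V x y) = vadd W (f x) (f y)) \<and>
     (\<forall>a. \<forall>x\<in>vcarrier V. f (vsmult V a x) = vsmult W a (f x))"

fun vsum :: "('k, 'w) vspace \<Rightarrow> (nat \<Rightarrow> 'w) \<Rightarrow> nat \<Rightarrow> 'w" where
  "vsum W f 0 = vzero W"
| "vsum W f (Suc n) = vadd W (vsum W f n) (f n)"

definition kline :: "('k::field, 'k) vspace" where
  "kline = \<lparr>vcarrier = UNIV, vzero = 0, vadd = (+), vsmult = (*)\<rparr>"

definition vpow :: "nat \<Rightarrow> ('k, 'v) vspace \<Rightarrow> ('k, nat \<Rightarrow> 'v) vspace" where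
  "vpow r V = \<lparr>vcarrier = {t. (\<forall>i<r. t i \<in> vcarrier V) \<and> (\<forall>i\<ge>r. t i = vzero V)},
     vzero = (\<lambda>_. vzero V),
     vadd = (\<lambda>s t i. vadd V (s i) (t i)),
     vsmult = (\<lambda>a t i. vsmult V a (t i))\<rparr>"

text \<open>A_r = k gamma_1 + ... + k gamma_r, identified with k^r (gamma_{i+1} = i-th unit vector).\<close>
definition Ar :: "nat \<Rightarrow> ('k::field, nat \<Rightarrow> 'k) vspace" where
  "Ar r = vpow r kline"

definition unitv :: "nat \<Rightarrow> nat \<Rightarrow> 'k::zero_neq_one" where
  "unitv i = (\<lambda>j. if j = i then 1 else 0)"

definition coset :: "('k, 'v) vspace \<Rightarrow> 'v set \<Rightarrow> 'v \<Rightarrow> 'v set" where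
  "coset V U x = {vadd V x u | u. u \<in> U}"

definition quot :: "('k, 'v) vspace \<Rightarrow> 'v set \<Rightarrow> ('k, 'v set) vspace" where
  "quot V U = \<lparr>vcarrier = coset V U ` vcarrier V,
     vzero = coset V U (vzero V),
     vadd = (\<lambda>X Y. coset V U (vadd V (SOME x. x \<in> X) (SOME y. y \<in> Y))),
     vsmult = (\<lambda>a X. coset V U (vsmult V a (SOME x. x \<in> X)))\<rparr>"

text \<open>Arrow gamma_{i+1} is indexed by i < r.\<close>
record ('k, 'v, 'w) krep =
  rep1 :: "('k, 'v) vspace"
  rep2 :: "('k, 'w) vspace"
  rmap :: "nat \<Rightarrow> 'v \<Rightarrow> 'w"

definition is_rep :: "nat \<Rightarrow> ('k::field, 'v, 'w) krep \<Rightarrow> bool" where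
  "is_rep r M \<longleftrightarrow> fd_vs (rep1 M) \<and> fd_vs (rep2 M) \<and>
     (\<forall>i<r. lin_map (rep1 M) (rep2 M) (rmap M i))"

text \<open>psi_M : A_r (x) M_1 = M_1^r \<rightarrow> M_2.\<close>
definition psi :: "nat \<Rightarrow> ('k, 'v, 'w) krep \<Rightarrow> (nat \<Rightarrow> 'v) \<Rightarrow> 'w" where
  "psi r M t = vsum (rep2 M) (\<lambda>i. rmap M i (t i)) r"

text \<open>The subspace v (x) M_1 of A_r (x) M_1 = M_1^r: span of the pure tensors a (x) m.\<close>
definition tens :: "nat \<Rightarrow> (nat \<Rightarrow> 'k) set \<Rightarrow> ('k, 'v, 'w) krep \<Rightarrow> (nat \<Rightarrow> 'v) set" where
  "tens r U M = vspan (vpow r (rep1 M))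
     {(\<lambda>i. vsmult (rep1 M) (a i) m) | a m. a \<in> U \<and> m \<in> vcarrier (rep1 M)}"

definition rep_proj :: "nat \<Rightarrow> nat \<Rightarrow> ('k::field, 'v, 'w) krep \<Rightarrow> bool" where
  "rep_proj r e M \<longleftrightarrow> (\<forall>U\<in>Gr (Ar r) e. \<forall>t\<in>tens r U M.
      psi r M t = vzero (rep2 M) \<longrightarrow> t = vzero (vpow r (rep1 M)))"

definition EKP :: "nat \<Rightarrow> ('k::field, 'v, 'w) krep \<Rightarrow> bool" where
  "EKP r M \<longleftrightarrow> rep_proj r 1 M"

definition is_mor :: "nat \<Rightarrow> ('k, 'v1, 'w1) krep \<Rightarrow> ('k, 'v2, 'w2) krep
    \<Rightarrow> ('v1 \<Rightarrow> 'v2) \<Rightarrow> ('w1 \<Rightarrow> 'w2) \<Rightarrow> bool" where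
  "is_mor r N M f1 f2 \<longleftrightarrow> lin_map (rep1 N) (rep1 M) f1 \<and> lin_map (rep2 N) (rep2 M) f2 \<and>
     (\<forall>i<r. \<forall>x\<in>vcarrier (rep1 N). f2 (rmap N i x) = rmap M i (f1 x))"

definition hom_zero :: "nat \<Rightarrow> ('k, 'v1, 'w1) krep \<Rightarrow> ('k, 'v2, 'w2) krep \<Rightarrow> bool" where
  "hom_zero r N M \<longleftrightarrow> (\<forall>f1 f2. is_mor r N M f1 f2 \<longrightarrow>
     (\<forall>x\<in>vcarrier (rep1 N). f1 x = vzero (rep1 M)) \<and>
     (\<forall>y\<in>vcarrier (rep2 N). f2 y = vzero (rep2 M)))"

definition Cw :: "nat \<Rightarrow> (nat \<Rightarrow> 'k::field) set \<Rightarrow> ('k, 'k, (nat \<Rightarrow> 'k) set) krep" where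
  "Cw r W = \<lparr>rep1 = kline, rep2 = quot (Ar r) W,
     rmap = (\<lambda>i c. coset (Ar r) W (vsmult (Ar r) c (unitv i)))\<rparr>"

definition sigma :: "nat \<Rightarrow> ('k, 'v, 'w) krep \<Rightarrow> ('k, nat \<Rightarrow> 'v, 'v) krep" where
  "sigma r M = \<lparr>rep1 = (vpow r (rep1 M))\<lparr>vcarrier :=
                   {t \<in> vcarrier (vpow r (rep1 M)). psi r M t = vzero (rep2 M)}\<rparr>,
                rep2 = rep1 M,
                rmap = (\<lambda>i t. t i)\<rparr>"

definition phi :: "nat \<Rightarrow> ('k, 'v, 'w) krep \<Rightarrow> 'v \<Rightarrow> nat \<Rightarrow> 'w" where
  "phi r M m = (\<lambda>i. if i < r then rmap M i m else vzero (rep2 M))"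

definition incl :: "('k, 'w) vspace \<Rightarrow> nat \<Rightarrow> 'w \<Rightarrow> nat \<Rightarrow> 'w" where
  "incl W i y = (\<lambda>j. if j = i then y else vzero W)"

definition sigma_inv :: "nat \<Rightarrow> ('k, 'v, 'w) krep \<Rightarrow> ('k, 'w, (nat \<Rightarrow> 'w) set) krep" where
  "sigma_inv r M = \<lparr>rep1 = rep2 M,
     rep2 = quot (vpow r (rep2 M)) (phi r M ` vcarrier (rep1 M)),
     rmap = (\<lambda>i y. coset (vpow r (rep2 M)) (phi r M ` vcarrier (rep1 M)) (incl (rep2 M) i y))\<rparr>"

end

theory Submission
  imports Defs "HOL-Library.Function_Algebras"
begin


definition scl :: "'k::field \<Rightarrow> (nat \<Rightarrow> 'k) \<Rightarrow> nat \<Rightarrow> 'k" where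
  "scl a f = (\<lambda>i. a * f i)"

global_interpretation fv: vector_space "scl :: 'k::field \<Rightarrow> _"
  by unfold_locales (auto simp: scl_def fun_eq_iff algebra_simps)

lemma scl_apply[simp]: "scl a f i = a * f i" by (simp add: scl_def)

lemma sum_fun_apply: "(sum f A) i = (\<Sum>x\<in>A. f x i)"
  by (induct A rule: infinite_finite_induct) auto

definition Sr :: "nat \<Rightarrow> (nat \<Rightarrow> 'k::field) set" where "Sr r = {f. \<forall>i\<ge>r. f i = 0}"
definition dot :: "nat \<Rightarrow> (nat \<Rightarrow> 'k::field) \<Rightarrow> (nat \<Rightarrow> 'k) \<Rightarrow> 'k" where
  "dot r a x = (\<Sum>i<r. a i * x i)"
definition perp :: "nat \<Rightarrow> (nat \<Rightarrow> 'k::field) set \<Rightarrow> (nat \<Rightarrow> 'k) set" where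
  "perp r U = {a \<in> Sr r. \<forall>x\<in>U. dot r a x = 0}"
definition Er :: "nat \<Rightarrow> (nat \<Rightarrow> 'k::field) set" where "Er r = unitv ` {..<r}"

definition GrF :: "nat \<Rightarrow> nat \<Rightarrow> (nat \<Rightarrow> 'k::field) set set" where
  "GrF r e = {U. U \<subseteq> Sr r \<and> fv.subspace U \<and>
     (\<exists>B. finite B \<and> card B = e \<and> B \<subseteq> U \<and> fv.independent B \<and> fv.span B = U)}"

lemma subspace_Sr: "fv.subspace (Sr r)"
  unfolding fv.subspace_def Sr_def by auto

lemma dot_sym: "dot r a x = dot r x a" by (simp add: dot_def mult.commute)
lemma dot_add_right: "dot r a (x + y) = dot r a x + dot r a y"
  by (simp add: dot_def algebra_simps sum.distrib)
lemma dot_scl_right: "dot r a (scl c x) = c * dot r a x"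
  by (simp add: dot_def sum_distrib_left algebra_simps)
lemma dot_diff_right: "dot r a (x - y) = dot r a x - dot r a y"
  by (simp add: dot_def algebra_simps sum_subtractf)
lemma dot_zero_right: "dot r a 0 = 0" by (simp add: dot_def)
lemma dot_sum_right: "dot r a (sum f A) = (\<Sum>j\<in>A. dot r a (f j))"
  by (simp add: dot_def sum_fun_apply sum_distrib_left) (rule sum.swap)
lemma dot_unitv_right: "i < r \<Longrightarrow> dot r a (unitv i) = a i"
  by (simp add: dot_def unitv_def if_distrib cong: if_cong)

lemma perp_Sr: "perp r U \<subseteq> Sr r" by (auto simp: perp_def)

lemma subspace_perp: "fv.subspace (perp r U)"
  unfolding fv.subspace_def perp_def using subspace_Sr[of r]
  by (auto simp: fv.subspace_def dot_def algebra_simps sum.distrib sum_distrib_left[symmetric])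

lemma subspace_dot0: "fv.subspace {x. dot r a x = 0}"
  unfolding fv.subspace_def by (auto simp: dot_add_right dot_scl_right dot_zero_right)

lemma perp_span: "perp r (fv.span B) = perp r B"
proof
  show "perp r (fv.span B) \<subseteq> perp r B" using fv.span_superset by (auto simp: perp_def)
  show "perp r B \<subseteq> perp r (fv.span B)"
  proof
    fix a assume a: "a \<in> perp r B"
    have "fv.span B \<subseteq> {x. dot r a x = 0}"
      by (rule fv.span_minimal) (use a subspace_dot0 in \<open>auto simp: perp_def\<close>)
    thus "a \<in> perp r (fv.span B)" using a by (auto simp: perp_def)
  qed
qed

lemma Sr_sum_unitv: "a \<in> Sr r \<Longrightarrow> a = (\<Sum>i<r. scl (a i) (unitv i))"
  by (auto simp: fun_eq_iff sum_fun_apply unitv_def Sr_def if_distrib cong: if_cong)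

lemma span_Er: "fv.span (Er r) = Sr r"
proof
  show "fv.span (Er r) \<subseteq> Sr r"
  proof (rule fv.span_minimal[OF _ subspace_Sr])
    show "Er r \<subseteq> Sr r" by (auto simp: Er_def Sr_def unitv_def)
  qed
  show "Sr r \<subseteq> fv.span (Er r)"
  proof
    fix a assume "a \<in> Sr r"
    hence "a = (\<Sum>i<r. scl (a i) (unitv i))" by (rule Sr_sum_unitv)
    also have "\<dots> \<in> fv.span (Er r)"
      by (intro fv.span_sum fv.span_scale fv.span_base) (auto simp: Er_def)
    finally show "a \<in> fv.span (Er r)" .
  qed
qed

lemma inj_unitv: "inj (unitv :: nat \<Rightarrow> nat \<Rightarrow> 'k::field)"
  by (rule injI) (metis unitv_def zero_neq_one)

lemma card_Er: "card (Er r :: (nat \<Rightarrow> 'k::field) set) = r"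
  unfolding Er_def by (simp add: card_image inj_on_subset[OF inj_unitv])

lemma finite_Er: "finite (Er r)" by (simp add: Er_def)

lemma indep_Er: "fv.independent (Er r :: (nat \<Rightarrow> 'k::field) set)"
proof (rule fv.independent_if_scalars_zero[OF finite_Er])
  fix f :: "(nat \<Rightarrow> 'k) \<Rightarrow> 'k" and x :: "nat \<Rightarrow> 'k"
  assume s: "(\<Sum>x\<in>Er r. scl (f x) x) = 0" and x: "x \<in> Er r"
  then obtain i where i: "i < r" "x = unitv i" by (auto simp: Er_def)
  have "(\<Sum>x\<in>Er r. scl (f x) x) = (\<Sum>j<r. scl (f (unitv j)) (unitv j))"
    unfolding Er_def by (simp add: sum.reindex inj_on_subset[OF inj_unitv])
  hence "(\<Sum>j<r. scl (f (unitv j)) (unitv j)) i = 0" using s by simp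
  hence "(\<Sum>j<r. f (unitv j) * unitv j i) = 0" by (simp add: sum_fun_apply)
  thus "f x = 0" using i by (simp add: unitv_def if_distrib cong: if_cong)
qed

lemma LE1: "finite T \<Longrightarrow> fv.independent S \<Longrightarrow> S \<subseteq> fv.span T \<Longrightarrow> finite S \<and> card S \<le> card T"
  by (rule fv.independent_span_bound)

lemma LE2:
  assumes T: "finite T" and S: "fv.independent S" and sub: "S \<subseteq> fv.span T"
    and c: "card T \<le> card S"
  shows "fv.span S = fv.span T"
proof
  show "fv.span S \<subseteq> fv.span T" using sub by (simp add: fv.span_minimal)
  have "T \<subseteq> fv.span S"
  proof (rule ccontr)
    assume "\<not> T \<subseteq> fv.span S"
    then obtain x where x: "x \<in> T" "x \<notin> fv.span S" by auto
    have fS: "finite S" using LE1[OF T S sub] by simp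
    have "fv.independent (insert x S)" using x S by (simp add: fv.independent_insertI)
    moreover have "insert x S \<subseteq> fv.span T" using sub x fv.span_base by auto
    ultimately have "card (insert x S) \<le> card T" using LE1[OF T] by blast
    moreover have "x \<notin> S" using x fv.span_base by blast
    ultimately show False using c fS by simp
  qed
  thus "fv.span T \<subseteq> fv.span S" by (simp add: fv.span_minimal)
qed


lemma HS:
  fixes m n :: nat
  assumes mn: "m < n" and q: "\<forall>i<n. q i \<in> Sr m"
  shows "\<exists>lam. (\<exists>i<n. lam i \<noteq> (0::'k::field)) \<and> (\<Sum>i<n. scl (lam i) (q i)) = 0"
proof (cases "inj_on q {..<n}")
  case True
  let ?Q = "q ` {..<n}"
  have cQ: "card ?Q = n" using True by (simp add: card_image)
  have sub: "?Q \<subseteq> fv.span (Er m)" using q by (auto simp: span_Er)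
  have "\<not> fv.independent ?Q"
  proof
    assume "fv.independent ?Q"
    from LE1[OF finite_Er this sub] have "n \<le> card (Er m :: (nat \<Rightarrow> 'k) set)" using cQ by simp
    thus False using mn by (simp add: card_Er)
  qed
  then obtain u where u: "\<exists>v\<in>?Q. u v \<noteq> 0" "(\<Sum>v\<in>?Q. scl (u v) v) = 0"
    using fv.dependent_finite[of ?Q] by auto
  show ?thesis
  proof (rule exI[of _ "\<lambda>i. u (q i)"], rule conjI)
    show "\<exists>i<n. u (q i) \<noteq> 0" using u(1) by auto
    show "(\<Sum>i<n. scl (u (q i)) (q i)) = 0"
      using u(2) by (simp add: sum.reindex[OF True])
  qed
next
  case False
  then obtain i j where ij: "i < n" "j < n" "i \<noteq> j" "q i = q j"
    by (auto simp: inj_on_def)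
  let ?lam = "\<lambda>k. if k = i then 1 else if k = j then -1 else (0::'k)"
  have "\<And>k. scl (?lam k) (q k) = (if k = i then q i else 0) + (if k = j then - q j else 0)"
    using ij by (auto simp: fun_eq_iff)
  hence "(\<Sum>k<n. scl (?lam k) (q k)) = (\<Sum>k<n. (if k = i then q i else 0) + (if k = j then - q j else 0))"
    by simp
  also have "\<dots> = q i - q j" using ij by (simp add: sum.distrib)
  also have "\<dots> = 0" using ij by simp
  finally show ?thesis using ij by (intro exI[of _ ?lam]) auto
qed

lemma enum_fin:
  assumes "finite B"
  obtains p where "bij_betw p {..<card B} B"
  using ex_bij_betw_nat_finite[OF assms] by (auto simp: atLeast0LessThan)

lemma LA1:
  assumes fB: "finite B" and cB: "card B < r" and BS: "B \<subseteq> Sr r"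
  shows "\<exists>a\<in>Sr r. a \<noteq> 0 \<and> (\<forall>x\<in>fv.span B. dot r a x = (0::'k::field))"
proof -
  let ?e = "card B"
  obtain p where p: "bij_betw p {..<?e} B" using enum_fin[OF fB] by blast
  define q where "q = (\<lambda>i l. if l < ?e then p l i else (0::'k))"
  have "\<forall>i<r. q i \<in> Sr ?e" by (auto simp: q_def Sr_def)
  from HS[OF cB this] obtain lam where lam: "\<exists>i<r. lam i \<noteq> 0" "(\<Sum>i<r. scl (lam i) (q i)) = 0"
    by blast
  define a where "a = (\<lambda>i. if i < r then lam i else 0)"
  have aS: "a \<in> Sr r" by (auto simp: a_def Sr_def)
  have an: "a \<noteq> 0" using lam(1) by (auto simp: a_def fun_eq_iff)
  have "a \<in> perp r B"
  proof -
    have "dot r a x = 0" if x: "x \<in> B" for x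
    proof -
      obtain l where l: "l < ?e" "x = p l" using p x by (auto simp: bij_betw_def)
      have "(\<Sum>i<r. scl (lam i) (q i)) l = 0" using lam(2) by simp
      hence "(\<Sum>i<r. lam i * p l i) = 0" using l by (simp add: sum_fun_apply q_def)
      thus ?thesis using l by (simp add: dot_def a_def)
    qed
    thus ?thesis using aS by (auto simp: perp_def)
  qed
  hence "a \<in> perp r (fv.span B)" by (simp add: perp_span)
  thus ?thesis using aS an by (auto simp: perp_def)
qed

lemma sum_scl_indep_zero:
  fixes d :: nat
  assumes inj: "inj_on p {..<d}" and ind: "fv.independent (p ` {..<d})"
    and s: "(\<Sum>l<d. scl (lam l) (p l)) = (0::nat\<Rightarrow>'k::field)" and l: "l < d"
  shows "lam l = 0"
proof -
  define u where "u = (\<lambda>v. lam (the_inv_into {..<d} p v))"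
  have "(\<Sum>v\<in>p ` {..<d}. scl (u v) v) = (\<Sum>l\<in>{..<d}. scl (u (p l)) (p l))"
    using sum.reindex[OF inj, of "\<lambda>v. scl (u v) v"] by (simp add: comp_def)
  also have "\<dots> = (\<Sum>l<d. scl (lam l) (p l))"
    by (rule sum.cong) (simp_all add: u_def the_inv_into_f_f[OF inj])
  finally have s2: "(\<Sum>v\<in>p ` {..<d}. scl (u v) v) = 0" using s by simp
  have fin: "finite (p ` {..<d})" by simp
  have "\<not> (\<exists>u. (\<exists>v\<in>p ` {..<d}. u v \<noteq> 0) \<and> (\<Sum>v\<in>p ` {..<d}. scl (u v) v) = 0)"
    using ind unfolding fv.dependent_finite[OF fin] .
  hence "u (p l) = 0" using s2 l by blast
  thus ?thesis using l by (simp add: u_def the_inv_into_f_f[OF inj])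
qed

lemma dual:
  fixes d :: nat
  assumes inj: "inj_on p {..<d}" and ind: "fv.independent (p ` {..<d})"
    and pS: "\<forall>l<d. p l \<in> Sr r" and j: "j < d"
  shows "\<exists>c\<in>Sr r. \<forall>l<d. dot r (p l) c = (if l = j then 1 else (0::'k::field))"
proof -
  define K where "K = (\<lambda>(a::nat\<Rightarrow>'k) (l::nat). if l < d then dot r (p l) a else (0::'k))"
  let ?Im = "K ` Sr r"
  have Kadd: "K (x + y) = K x + K y" for x y by (auto simp: K_def fun_eq_iff dot_add_right)
  have Kscl: "K (scl c x) = scl c (K x)" for c x by (auto simp: K_def fun_eq_iff dot_scl_right)
  have K0: "K 0 = 0" by (auto simp: K_def fun_eq_iff dot_zero_right)
  have subIm: "fv.subspace ?Im"
  proof (rule fv.subspaceI)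
    show "0 \<in> ?Im" using K0 fv.subspace_0[OF subspace_Sr] by (metis image_eqI)
    fix x y assume "x \<in> ?Im" "y \<in> ?Im"
    then obtain x' y' where "x' \<in> Sr r" "y' \<in> Sr r" "x = K x'" "y = K y'" by auto
    thus "x + y \<in> ?Im" using Kadd fv.subspace_add[OF subspace_Sr] by (metis image_eqI)
  next
    fix c x assume "x \<in> ?Im"
    then obtain x' where "x' \<in> Sr r" "x = K x'" by auto
    thus "scl c x \<in> ?Im" using Kscl fv.subspace_scale[OF subspace_Sr] by (metis image_eqI)
  qed
  have ImS: "?Im \<subseteq> Sr d" by (auto simp: K_def Sr_def)
  obtain Q where Q: "Q \<subseteq> ?Im" "fv.independent Q" "?Im \<subseteq> fv.span Q"
    using fv.maximal_independent_subset by blast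
  have QE: "Q \<subseteq> fv.span (Er d)" using Q(1) ImS by (auto simp: span_Er)
  from LE1[OF finite_Er Q(2) QE] have fQ: "finite Q" and cQ: "card Q \<le> d"
    by (auto simp: card_Er)
  have "card Q = d"
  proof (rule ccontr)
    assume "card Q \<noteq> d"
    hence "card Q < d" using cQ by simp
    from LA1[OF fQ this] Q(1) ImS obtain lam where lam: "lam \<in> Sr d" "lam \<noteq> 0"
      "\<forall>x\<in>fv.span Q. dot d lam x = 0" by blast
    have "(\<Sum>l<d. scl (lam l) (p l)) = 0"
    proof
      fix i
      show "(\<Sum>l<d. scl (lam l) (p l)) i = 0 i"
      proof (cases "i < r")
        case True
        have "unitv i \<in> Sr r" using True by (auto simp: Sr_def unitv_def)
        hence "K (unitv i) \<in> fv.span Q" using Q(3) by blast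
        hence "dot d lam (K (unitv i)) = 0" using lam(3) by blast
        moreover have "K (unitv i) = (\<lambda>l. if l < d then p l i else 0)" by (auto simp: K_def fun_eq_iff dot_unitv_right[OF True])
        ultimately show ?thesis by (simp add: sum_fun_apply dot_def)
      next
        case False
        thus ?thesis using pS by (simp add: sum_fun_apply Sr_def)
      qed
    qed
    hence "\<forall>l<d. lam l = 0" using sum_scl_indep_zero[OF inj ind] by blast
    hence "lam = 0" using lam(1) by (auto simp: Sr_def fun_eq_iff) (metis not_le)
    thus False using lam(2) by simp
  qed
  hence "fv.span Q = fv.span (Er d)" using LE2[OF finite_Er Q(2) QE] by (simp add: card_Er)
  hence "Sr d \<subseteq> ?Im" using fv.span_minimal[OF Q(1) subIm] by (simp add: span_Er)
  moreover have "unitv j \<in> Sr d" using j by (auto simp: Sr_def unitv_def)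
  ultimately obtain c where c: "c \<in> Sr r" "unitv j = K c" by auto
  show ?thesis
  proof (intro bexI[OF _ c(1)] allI impI)
    fix l assume "l < d"
    have "unitv j l = K c l" using c by simp
    thus "dot r (p l) c = (if l = j then 1 else 0)" using \<open>l < d\<close> by (simp add: K_def unitv_def)
  qed
qed

lemma dual_all:
  fixes d :: nat
  assumes inj: "inj_on p {..<d}" and ind: "fv.independent (p ` {..<d})"
    and pS: "\<forall>l<d. p l \<in> Sr r"
  shows "\<exists>c. \<forall>j<d. c j \<in> Sr r \<and> (\<forall>l<d. dot r (p l) (c j) = (if l = j then 1 else (0::'k::field)))"
  using dual[OF inj ind pS] by metis


lemma GrF_basis:
  assumes "U \<in> GrF r e"
  obtains p where "inj_on p {..<e}" "fv.independent (p ` {..<e})" "\<forall>l<e. p l \<in> Sr r"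
    "fv.span (p ` {..<e}) = U" "U \<subseteq> Sr r" "fv.subspace U"
proof -
  from assms obtain B where B: "finite B" "card B = e" "B \<subseteq> U" "fv.independent B"
    "fv.span B = U" "U \<subseteq> Sr r" "fv.subspace U" by (auto simp: GrF_def)
  obtain p where p: "bij_betw p {..<card B} B" using enum_fin[OF B(1)] by blast
  show ?thesis by (rule that) (use p B in \<open>auto simp: bij_betw_def\<close>)
qed

lemma perp_basis: "perp r (fv.span (p ` {..<e})) = {a\<in>Sr r. \<forall>l<e. dot r (p l) a = 0}"
proof -
  have "perp r (p ` {..<e}) = {a\<in>Sr r. \<forall>l<e. dot r (p l) a = 0}"
    by (auto simp: perp_def dot_sym[of r _ "p _"])
  thus ?thesis by (simp add: perp_span)
qed

lemma GrF_le: assumes "U \<in> GrF r e" shows "e \<le> r"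
proof -
  from assms obtain B where B: "finite B" "card B = e" "B \<subseteq> U" "fv.independent B"
    "U \<subseteq> Sr r" by (auto simp: GrF_def)
  have "B \<subseteq> fv.span (Er r)" using B by (auto simp: span_Er)
  from LE1[OF finite_Er B(4) this] B(2) show ?thesis by (simp add: card_Er)
qed

lemma LA3:
  fixes U :: "(nat \<Rightarrow> 'k::field) set"
  assumes U: "U \<in> GrF r e"
  shows "perp r U \<in> GrF r (r - e)"
proof -
  obtain p where p: "inj_on p {..<e}" "fv.independent (p ` {..<e})" "\<forall>l<e. p l \<in> Sr r"
    "fv.span (p ` {..<e}) = U" "U \<subseteq> Sr r"
    by (rule GrF_basis[OF U])
  obtain c where c: "\<forall>j<e. c j \<in> Sr r \<and> (\<forall>l<e. dot r (p l) (c j) = (if l = j then 1 else 0))"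
    using dual_all[OF p(1-3)] by blast
  define P where "P = perp r U"
  have P: "P = {a\<in>Sr r. \<forall>l<e. dot r (p l) a = 0}" unfolding P_def using perp_basis[of r p e] p(4) by simp
  have subP: "fv.subspace P" using subspace_perp P_def by simp
  have PS: "P \<subseteq> Sr r" using perp_Sr P_def by simp
  obtain D where D: "D \<subseteq> P" "fv.independent D" "P \<subseteq> fv.span D"
    using fv.maximal_independent_subset by blast
  have "D \<subseteq> fv.span (Er r)" using D(1) PS by (simp add: span_Er)
  with LE1[OF finite_Er D(2)] have fD: "finite D" by simp
  define C where "C = c ` {..<e}"
  have injc: "inj_on c {..<e}"
  proof (rule inj_onI)
    fix j j' assume jj: "j \<in> {..<e}" "j' \<in> {..<e}" "c j = c j'"
    have 1: "dot r (p j) (c j) = 1" using c jj(1) by simp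
    have 2: "dot r (p j) (c j') = (if j = j' then 1 else 0)" using c jj(1,2) by simp
    show "j = j'" using 1 2 jj(3) by (cases "j = j'") auto
  qed
  have fC: "finite C" by (simp add: C_def)
  have CD: "C \<inter> D = {}"
  proof (rule ccontr)
    assume "C \<inter> D \<noteq> {}"
    then obtain j where j: "j < e" "c j \<in> D" by (auto simp: C_def)
    hence "dot r (p j) (c j) = 0" using D(1) P by auto
    moreover have "dot r (p j) (c j) = 1" using c j by simp
    ultimately show False by simp
  qed
  have CS: "C \<subseteq> Sr r" using c by (auto simp: C_def)
  have indCD: "fv.independent (C \<union> D)"
  proof (rule fv.independent_if_scalars_zero)
    show "finite (C \<union> D)" using fC fD by simp
    fix f x assume s: "(\<Sum>x\<in>C \<union> D. scl (f x) x) = 0" and x: "x \<in> C \<union> D"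
    have split: "(\<Sum>x\<in>C \<union> D. scl (f x) x) = (\<Sum>x\<in>C. scl (f x) x) + (\<Sum>x\<in>D. scl (f x) x)"
      by (rule sum.union_disjoint[OF fC fD CD])
    have sC: "(\<Sum>x\<in>C. scl (f x) x) = (\<Sum>j<e. scl (f (c j)) (c j))"
      unfolding C_def using sum.reindex[OF injc, of "\<lambda>x. scl (f x) x"] by (simp add: comp_def)
    have fc: "f (c l) = 0" if l: "l < e" for l
    proof -
      have "0 = dot r (p l) (\<Sum>x\<in>C \<union> D. scl (f x) x)" using s by (simp add: dot_zero_right)
      also have "\<dots> = (\<Sum>j<e. f (c j) * dot r (p l) (c j)) + (\<Sum>x\<in>D. f x * dot r (p l) x)"
        unfolding split sC by (simp add: dot_add_right dot_sum_right dot_scl_right)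
      also have "(\<Sum>x\<in>D. f x * dot r (p l) x) = 0"
        using D(1) P l by (intro sum.neutral) auto
      also have "(\<Sum>j<e. f (c j) * dot r (p l) (c j)) = (\<Sum>j<e. if l = j then f (c j) else 0)"
        using c l by (intro sum.cong) auto
      also have "\<dots> = f (c l)" using l by simp
      finally show ?thesis by simp
    qed
    have "(\<Sum>x\<in>C. scl (f x) x) = 0" unfolding sC using fc by (intro sum.neutral) (auto simp: fun_eq_iff)
    hence sD: "(\<Sum>x\<in>D. scl (f x) x) = 0" using s split by simp
    have nd: "\<not> (\<exists>u. (\<exists>v\<in>D. u v \<noteq> 0) \<and> (\<Sum>v\<in>D. scl (u v) v) = 0)"
      using D(2) unfolding fv.dependent_finite[OF fD] .
    show "f x = 0"
    proof (cases "x \<in> C")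
      case True then show ?thesis using fc by (auto simp: C_def)
    next
      case False then show ?thesis using x nd sD by blast
    qed
  qed
  have spCD: "Sr r \<subseteq> fv.span (C \<union> D)"
  proof
    fix a :: "nat \<Rightarrow> 'k" assume a: "a \<in> Sr r"
    define s where "s = (\<Sum>j<e. scl (dot r (p j) a) (c j))"
    define y where "y = a - s"
    have sC: "s \<in> fv.span C" unfolding s_def
      by (intro fv.span_sum fv.span_scale fv.span_base) (auto simp: C_def)
    have "y \<in> Sr r" using a c by (auto simp: y_def s_def Sr_def sum_fun_apply)
    moreover have "dot r (p l) y = 0" if l: "l < e" for l
    proof -
      have "dot r (p l) s = (\<Sum>j<e. dot r (p j) a * dot r (p l) (c j))"
        by (simp add: s_def dot_sum_right dot_scl_right)
      also have "\<dots> = (\<Sum>j<e. if l = j then dot r (p j) a else 0)"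
        using c l by (intro sum.cong) auto
      also have "\<dots> = dot r (p l) a" using l by simp
      finally show ?thesis by (simp add: y_def dot_diff_right)
    qed
    ultimately have "y \<in> P" using P by auto
    hence "y \<in> fv.span (C \<union> D)" using D(3) fv.span_mono[of D "C \<union> D"] by blast
    moreover have "s \<in> fv.span (C \<union> D)" using sC fv.span_mono[of C "C \<union> D"] by blast
    ultimately have "y + s \<in> fv.span (C \<union> D)" by (rule fv.span_add)
    thus "a \<in> fv.span (C \<union> D)" by (simp add: y_def)
  qed
  have fCD: "finite (C \<union> D)" using fC fD by simp
  have h1: "card (C \<union> D) \<le> r"
  proof -
    have "C \<union> D \<subseteq> fv.span (Er r)" using CS D(1) PS by (auto simp: span_Er)
    from LE1[OF finite_Er indCD this] show ?thesis by (simp add: card_Er)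
  qed
  have h2: "r \<le> card (C \<union> D)"
  proof -
    have "Er r \<subseteq> fv.span (C \<union> D)" using spCD by (auto simp: span_Er[symmetric] fv.span_base)
    from LE1[OF fCD indep_Er this] show ?thesis by (simp add: card_Er)
  qed
  have "card (C \<union> D) = e + card D"
    using card_Un_disjoint[OF fC fD CD] card_image[OF injc] by (simp add: C_def)
  hence cD: "card D = r - e" using h1 h2 by simp
  have spD: "fv.span D = P" by (rule fv.span_subspace[OF D(1) D(3) subP])
  show ?thesis unfolding GrF_def P_def[symmetric]
    by (intro CollectI conjI PS subP exI[of _ D]) (use fD cD D spD in auto)
qed

lemma LA5:
  assumes W: "W \<in> GrF r e"
  shows "perp r (perp r W) = W"
proof -
  have e: "e \<le> r" by (rule GrF_le[OF W])
  have PP: "perp r (perp r W) \<in> GrF r e" using LA3[OF LA3[OF W]] e by simp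
  have sub: "W \<subseteq> perp r (perp r W)"
    using W by (auto simp: perp_def GrF_def dot_sym[of r _ "_ :: nat \<Rightarrow> _"])
  obtain B where B: "finite B" "card B = e" "B \<subseteq> W" "fv.independent B" "fv.span B = W"
    using W by (auto simp: GrF_def)
  obtain B2 where B2: "finite B2" "card B2 = e" "fv.span B2 = perp r (perp r W)"
    using PP by (auto simp: GrF_def)
  have "B \<subseteq> fv.span B2" using B(3) sub B2(3) by blast
  from LE2[OF B2(1) B(4) this] B(2) B2(2) have "fv.span B = fv.span B2" by simp
  thus ?thesis using B(5) B2(3) by simp
qed

lemma LA2:
  assumes a: "a \<in> Sr r" "a \<noteq> 0" and d: "1 \<le> d" "d \<le> r"
  shows "\<exists>U\<in>GrF r d. a \<in> U"
proof -
  have "fv.independent {a}" using a by simp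
  then obtain B where B: "{a} \<subseteq> B" "B \<subseteq> Sr r" "fv.independent B" "Sr r \<subseteq> fv.span B"
    using fv.maximal_independent_subset_extend[of "{a}" "Sr r"] a by blast
  have "B \<subseteq> fv.span (Er r)" using B(2) by (simp add: span_Er)
  from LE1[OF finite_Er B(3) this] have fB: "finite B" by simp
  have "Er r \<subseteq> fv.span B" using B(4) span_Er fv.span_base by blast
  from LE1[OF fB indep_Er this] have rB: "r \<le> card B" by (simp add: card_Er)
  have "d - 1 \<le> card (B - {a})" using rB d B(1) fB by (simp add: card_Diff_singleton)
  then obtain B0 where B0: "B0 \<subseteq> B - {a}" "card B0 = d - 1" "finite B0"
    by (rule obtain_subset_with_card_n)
  let ?B = "insert a B0"
  have cB: "card ?B = d" using B0 d by (subst card_insert_disjoint) auto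
  have sS: "fv.span ?B \<subseteq> Sr r" using B0 B(1,2) by (intro fv.span_minimal[OF _ subspace_Sr]) auto
  have "fv.span ?B \<in> GrF r d"
    unfolding GrF_def
    using sS cB B0 fv.span_superset[of ?B] fv.independent_mono[OF B(3), of ?B] B(1)
    by (auto intro!: exI[of _ ?B])
  moreover have "a \<in> fv.span ?B" by (simp add: fv.span_base)
  ultimately show ?thesis by blast
qed

lemma Ar_simps: "vcarrier (Ar r) = Sr r" "vzero (Ar r) = 0" "vadd (Ar r) = (+)" "vsmult (Ar r) = scl"
  by (auto simp: Ar_def vpow_def kline_def Sr_def fun_eq_iff scl_def)

lemma vspan_Ar: "vspan (Ar r) B = fv.span B"
proof
  show "vspan (Ar r) B \<subseteq> fv.span B"
  proof
    fix x assume "x \<in> vspan (Ar r) B"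
    thus "x \<in> fv.span B"
      apply (induct rule: vspan.induct)
         apply (simp_all only: Ar_simps)
         apply (rule fv.span_zero)
        apply (erule fv.span_base)
       apply (erule (1) fv.span_add)
      apply (erule fv.span_scale)
      done
  qed
  show "fv.span B \<subseteq> vspan (Ar r) B"
  proof (rule fv.span_minimal)
    show "B \<subseteq> vspan (Ar r) B" by (auto intro: vspan.span_gen)
    show "fv.subspace (vspan (Ar r) B)"
      using vspan.span_zero[of "Ar r" B] vspan.span_add[of _ "Ar r" B] vspan.span_smult[of _ "Ar r" B]
      by (auto simp: fv.subspace_def Ar_simps)
  qed
qed

lemma lin_indep_Ar: "lin_indep (Ar r) B \<longleftrightarrow> fv.independent B"
  by (simp add: lin_indep_def vspan_Ar fv.dependent_def)

lemma subspace_of_Ar: "subspace_of (Ar r) U \<longleftrightarrow> U \<subseteq> Sr r \<and> fv.subspace U"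
  by (auto simp: subspace_of_def fv.subspace_def Ar_simps)

lemma Gr_Ar: "Gr (Ar r) e = GrF r e"
  by (simp add: Gr_def GrF_def lin_indep_Ar vspan_Ar subspace_of_Ar)


definition vs_ax :: "('k::field, 'v) vspace \<Rightarrow> bool" where
  "vs_ax V \<longleftrightarrow>
     vzero V \<in> vcarrier V \<and>
     (\<forall>x\<in>vcarrier V. \<forall>y\<in>vcarrier V. vadd V x y \<in> vcarrier V) \<and>
     (\<forall>a. \<forall>x\<in>vcarrier V. vsmult V a x \<in> vcarrier V) \<and>
     (\<forall>x\<in>vcarrier V. \<forall>y\<in>vcarrier V. \<forall>z\<in>vcarrier V.
        vadd V (vadd V x y) z = vadd V x (vadd V y z)) \<and>
     (\<forall>x\<in>vcarrier V. \<forall>y\<in>vcarrier V. vadd V x y = vadd V y x) \<and>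
     (\<forall>x\<in>vcarrier V. vadd V (vzero V) x = x) \<and>
     (\<forall>x\<in>vcarrier V. \<exists>y\<in>vcarrier V. vadd V x y = vzero V) \<and>
     (\<forall>x\<in>vcarrier V. vsmult V 1 x = x) \<and>
     (\<forall>a b. \<forall>x\<in>vcarrier V. vsmult V a (vsmult V b x) = vsmult V (a * b) x) \<and>
     (\<forall>a b. \<forall>x\<in>vcarrier V. vsmult V (a + b) x = vadd V (vsmult V a x) (vsmult V b x)) \<and>
     (\<forall>a. \<forall>x\<in>vcarrier V. \<forall>y\<in>vcarrier V.
        vsmult V a (vadd V x y) = vadd V (vsmult V a x) (vsmult V a y))"

lemma fd_vs_ax: "fd_vs V \<Longrightarrow> vs_ax V" unfolding fd_vs_def vs_ax_def by (elim conjE) (intro conjI; assumption)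

locale vsp = fixes V :: "('k::field, 'v) vspace" assumes ax: "vs_ax V"
begin

lemma zero_in[simp]: "vzero V \<in> vcarrier V" using ax unfolding vs_ax_def by (elim conjE) blast
lemma add_cl[simp]: "x \<in> vcarrier V \<Longrightarrow> y \<in> vcarrier V \<Longrightarrow> vadd V x y \<in> vcarrier V"
  using ax unfolding vs_ax_def by (elim conjE) blast
lemma sm_cl[simp]: "x \<in> vcarrier V \<Longrightarrow> vsmult V a x \<in> vcarrier V"
  using ax unfolding vs_ax_def by (elim conjE) blast
lemma add_assoc: "x \<in> vcarrier V \<Longrightarrow> y \<in> vcarrier V \<Longrightarrow> w \<in> vcarrier V \<Longrightarrow>
    vadd V (vadd V x y) w = vadd V x (vadd V y w)"
  using ax unfolding vs_ax_def by (elim conjE) blast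
lemma add_comm: "x \<in> vcarrier V \<Longrightarrow> y \<in> vcarrier V \<Longrightarrow> vadd V x y = vadd V y x"
  using ax unfolding vs_ax_def by (elim conjE) blast
lemma zero_add[simp]: "x \<in> vcarrier V \<Longrightarrow> vadd V (vzero V) x = x"
  using ax unfolding vs_ax_def by (elim conjE) blast
lemma add_zero[simp]: "x \<in> vcarrier V \<Longrightarrow> vadd V x (vzero V) = x"
  using add_comm zero_add zero_in by metis
lemma neg: "x \<in> vcarrier V \<Longrightarrow> \<exists>y\<in>vcarrier V. vadd V x y = vzero V"
  using ax unfolding vs_ax_def by (elim conjE) blast
lemma sm_one[simp]: "x \<in> vcarrier V \<Longrightarrow> vsmult V 1 x = x"
  using ax unfolding vs_ax_def by (elim conjE) blast
lemma sm_assoc: "x \<in> vcarrier V \<Longrightarrow> vsmult V a (vsmult V b x) = vsmult V (a * b) x"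
  using ax unfolding vs_ax_def by (elim conjE) blast
lemma sm_ldist: "x \<in> vcarrier V \<Longrightarrow> vsmult V (a + b) x = vadd V (vsmult V a x) (vsmult V b x)"
  using ax unfolding vs_ax_def by (elim conjE) blast
lemma sm_rdist: "x \<in> vcarrier V \<Longrightarrow> y \<in> vcarrier V \<Longrightarrow>
    vsmult V a (vadd V x y) = vadd V (vsmult V a x) (vsmult V a y)"
proof -
  have "\<forall>a. \<forall>x\<in>vcarrier V. \<forall>y\<in>vcarrier V.
        vsmult V a (vadd V x y) = vadd V (vsmult V a x) (vsmult V a y)"
    using ax unfolding vs_ax_def by (elim conjE) assumption
  thus "x \<in> vcarrier V \<Longrightarrow> y \<in> vcarrier V \<Longrightarrow>
    vsmult V a (vadd V x y) = vadd V (vsmult V a x) (vsmult V a y)" by blast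
qed

lemma cancel:
  assumes x: "x \<in> vcarrier V" and y: "y \<in> vcarrier V" and w: "w \<in> vcarrier V"
    and e: "vadd V x y = vadd V x w"
  shows "y = w"
proof -
  obtain n where n: "n \<in> vcarrier V" "vadd V x n = vzero V" using neg[OF x] by blast
  have "y = vadd V (vadd V n x) y" using n x y add_comm by simp
  also have "\<dots> = vadd V n (vadd V x y)" using n x y add_assoc by simp
  also have "\<dots> = vadd V n (vadd V x w)" using e by simp
  also have "\<dots> = vadd V (vadd V n x) w" using n x w add_assoc by simp
  also have "\<dots> = w" using n x w add_comm by simp
  finally show ?thesis .
qed

lemma sm_zero_left[simp]: "x \<in> vcarrier V \<Longrightarrow> vsmult V 0 x = vzero V"
  using sm_ldist[of x 0 0] cancel[of "vsmult V 0 x" "vsmult V 0 x" "vzero V"] by simp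

lemma sm_zero_right[simp]: "vsmult V a (vzero V) = vzero V"
  using sm_rdist[of "vzero V" "vzero V" a] cancel[of "vsmult V a (vzero V)" "vsmult V a (vzero V)" "vzero V"]
  by simp

lemma add_neg: "x \<in> vcarrier V \<Longrightarrow> vadd V x (vsmult V (-1) x) = vzero V"
  using sm_ldist[of x 1 "-1"] by simp

lemma sm_eq_zero: "a \<noteq> 0 \<Longrightarrow> x \<in> vcarrier V \<Longrightarrow> vsmult V a x = vzero V \<Longrightarrow> x = vzero V"
  by (metis sm_assoc sm_one sm_zero_right field_class.field_inverse)

lemma add_swap4: "a \<in> vcarrier V \<Longrightarrow> b \<in> vcarrier V \<Longrightarrow> c \<in> vcarrier V \<Longrightarrow> d \<in> vcarrier V \<Longrightarrow>
   vadd V (vadd V a b) (vadd V c d) = vadd V (vadd V a c) (vadd V b d)"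
  by (metis add_assoc add_cl add_comm)

lemma vsum_cl: "(\<And>i. i < n \<Longrightarrow> f i \<in> vcarrier V) \<Longrightarrow> vsum V f n \<in> vcarrier V"
  by (induct n) auto

lemma vsum_cong: "(\<And>i. i < n \<Longrightarrow> f i = g i) \<Longrightarrow> vsum V f n = vsum V g n"
  by (induct n) auto

lemma vsum_add:
  "(\<And>i. i < n \<Longrightarrow> f i \<in> vcarrier V) \<Longrightarrow> (\<And>i. i < n \<Longrightarrow> g i \<in> vcarrier V) \<Longrightarrow>
   vsum V (\<lambda>i. vadd V (f i) (g i)) n = vadd V (vsum V f n) (vsum V g n)"
proof (induct n)
  case 0 thus ?case by simp
next
  case (Suc n)
  thus ?case by (simp add: add_swap4 vsum_cl)
qed

lemma vsum_sm:
  "(\<And>i. i < n \<Longrightarrow> f i \<in> vcarrier V) \<Longrightarrow>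
   vsmult V a (vsum V f n) = vsum V (\<lambda>i. vsmult V a (f i)) n"
  by (induct n) (auto simp: sm_rdist vsum_cl)

lemma vsum_zero: "vsum V (\<lambda>i. vzero V) n = vzero V"
  by (induct n) auto

lemma vsum_sm_left: "m \<in> vcarrier V \<Longrightarrow>
   vsum V (\<lambda>i. vsmult V (c i) m) n = vsmult V (\<Sum>i<n. c i) m"
  by (induct n) (auto simp: sm_ldist)

lemma vsum_delta:
  assumes "i < n" "\<And>j. j < n \<Longrightarrow> j \<noteq> i \<Longrightarrow> f j = vzero V" "f i \<in> vcarrier V"
  shows "vsum V f n = f i"
  using assms
proof (induct n)
  case 0 thus ?case by simp
next
  case (Suc n)
  show ?case
  proof (cases "i = n")
    case True
    have "vsum V f n = vsum V (\<lambda>i. vzero V) n" using Suc.prems True by (intro vsum_cong) auto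
    thus ?thesis using True Suc.prems by (simp add: vsum_zero)
  next
    case False
    hence "vsum V f n = f i" using Suc by auto
    thus ?thesis using False Suc.prems by simp
  qed
qed

end

lemma lin_map_zero:
  assumes V: "vsp V" and W: "vsp W" and f: "lin_map V W f"
  shows "f (vzero V) = vzero W"
proof -
  have fz: "f (vzero V) \<in> vcarrier W" using f vsp.zero_in[OF V] by (simp add: lin_map_def)
  have "f (vzero V) = f (vadd V (vzero V) (vzero V))" using vsp.zero_add[OF V] vsp.zero_in[OF V] by simp
  also have "\<dots> = vadd W (f (vzero V)) (f (vzero V))" using f vsp.zero_in[OF V] by (simp add: lin_map_def)
  finally have "vadd W (f (vzero V)) (vzero W) = vadd W (f (vzero V)) (f (vzero V))"
    using vsp.add_zero[OF W fz] by simp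
  thus ?thesis using vsp.cancel[OF W fz _ fz] vsp.zero_in[OF W] by metis
qed

lemma lin_map_vsum:
  assumes V: "vsp V" and W: "vsp W" and f: "lin_map V W f"
  shows "(\<And>i. i < n \<Longrightarrow> g i \<in> vcarrier V) \<Longrightarrow> f (vsum V g n) = vsum W (\<lambda>i. f (g i)) n"
proof (induct n)
  case 0 thus ?case using lin_map_zero[OF V W f] by simp
next
  case (Suc n)
  thus ?case using f vsp.vsum_cl[OF V] by (simp add: lin_map_def)
qed

lemma vpow_simps:
  "vcarrier (vpow r V) = {t. (\<forall>i<r. t i \<in> vcarrier V) \<and> (\<forall>i\<ge>r. t i = vzero V)}"
  "vzero (vpow r V) = (\<lambda>_. vzero V)"
  "vadd (vpow r V) = (\<lambda>s t i. vadd V (s i) (t i))"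
  "vsmult (vpow r V) = (\<lambda>a t i. vsmult V a (t i))"
  by (simp_all add: vpow_def)

lemma vsum_vpow_apply: "(vsum (vpow r V) F n) i = vsum V (\<lambda>j. F j i) n"
  by (induct n) (simp_all add: vpow_simps)

lemma (in vsp) vpow_mem_all: "t \<in> vcarrier (vpow r V) \<Longrightarrow> t i \<in> vcarrier V"
  by (cases "i < r") (auto simp: vpow_simps)

lemma (in vsp) mem_pt:
  fixes r j :: nat
  assumes "\<forall>i<r. t i \<in> vcarrier V" "\<forall>i\<ge>r. t i = vzero V" shows "t j \<in> vcarrier V"
proof (cases "j < r")
  case True thus ?thesis using assms(1) by blast
next
  case False hence "t j = vzero V" using assms(2) by simp
  thus ?thesis by simp
qed

lemma (in vsp) vsp_vpow: "vsp (vpow r V)"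
proof -
  have "\<exists>y\<in>vcarrier (vpow r V). vadd (vpow r V) x y = vzero (vpow r V)"
    if x: "x \<in> vcarrier (vpow r V)" for x
  proof (intro bexI)
    show "vadd (vpow r V) x (\<lambda>i. vsmult V (-1) (x i)) = vzero (vpow r V)"
      using vpow_mem_all[OF x] by (simp add: vpow_simps add_neg)
    show "(\<lambda>i. vsmult V (-1) (x i)) \<in> vcarrier (vpow r V)"
      using x by (auto simp: vpow_simps)
  qed
  thus ?thesis
    unfolding vsp_def vs_ax_def
    apply (intro conjI ballI allI)
    apply (simp_all add: vpow_simps fun_eq_iff)
    apply (auto simp: add_assoc sm_assoc sm_ldist sm_rdist mem_pt[of r])
    apply (rule add_comm; auto intro: mem_pt[of r])
    done
qed


context vsp
begin

lemma sub_facts: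
  assumes "subspace_of V U"
  shows "U \<subseteq> vcarrier V" "vzero V \<in> U" "\<And>x y. x\<in>U \<Longrightarrow> y\<in>U \<Longrightarrow> vadd V x y \<in> U"
    "\<And>x a. x\<in>U \<Longrightarrow> vsmult V a x \<in> U"
  using assms by (auto simp: subspace_of_def)

lemma coset_shift:
  assumes U: "subspace_of V U" and x: "x \<in> vcarrier V" and u: "u \<in> U"
  shows "coset V U (vadd V x u) = coset V U x"
proof
  note S = sub_facts[OF U]
  have uC: "u \<in> vcarrier V" using u S(1) by blast
  show "coset V U (vadd V x u) \<subseteq> coset V U x"
  proof
    fix w assume "w \<in> coset V U (vadd V x u)"
    then obtain u' where u': "u' \<in> U" "w = vadd V (vadd V x u) u'" by (auto simp: coset_def)
    have "w = vadd V x (vadd V u u')" using u' x uC S(1) add_assoc by auto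
    thus "w \<in> coset V U x" using S(3)[OF u u'(1)] by (auto simp: coset_def)
  qed
  show "coset V U x \<subseteq> coset V U (vadd V x u)"
  proof
    fix w assume "w \<in> coset V U x"
    then obtain u'' where u'': "u'' \<in> U" "w = vadd V x u''" by (auto simp: coset_def)
    have u''C: "u'' \<in> vcarrier V" using u''(1) S(1) by blast
    let ?n = "vsmult V (-1) u"
    have nC: "?n \<in> vcarrier V" using uC by simp
    have "vadd V (vadd V x u) (vadd V ?n u'') = vadd V x (vadd V u (vadd V ?n u''))"
      using x uC nC u''C add_assoc by simp
    also have "vadd V u (vadd V ?n u'') = vadd V (vadd V u ?n) u''"
      using uC nC u''C add_assoc by simp
    also have "\<dots> = u''" using add_neg[OF uC] u''C by simp
    finally have "w = vadd V (vadd V x u) (vadd V ?n u'')" using u'' by simp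
    moreover have "vadd V ?n u'' \<in> U" using S(3)[OF S(4)[OF u] u''(1)] .
    ultimately show "w \<in> coset V U (vadd V x u)" by (auto simp: coset_def)
  qed
qed

lemma coset_self: "subspace_of V U \<Longrightarrow> x \<in> vcarrier V \<Longrightarrow> x \<in> coset V U x"
  using sub_facts(2)[of U] by (force simp: coset_def)

lemma some_coset:
  assumes U: "subspace_of V U" and x: "x \<in> vcarrier V"
  shows "\<exists>u\<in>U. (SOME z. z \<in> coset V U x) = vadd V x u"
proof -
  have "(SOME z. z \<in> coset V U x) \<in> coset V U x" using coset_self[OF U x] by (rule someI)
  thus ?thesis by (auto simp: coset_def)
qed

lemma quot_add:
  assumes U: "subspace_of V U" and x: "x \<in> vcarrier V" and y: "y \<in> vcarrier V"
  shows "vadd (quot V U) (coset V U x) (coset V U y) = coset V U (vadd V x y)"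
proof -
  note S = sub_facts[OF U]
  obtain u where u: "u \<in> U" "(SOME z. z \<in> coset V U x) = vadd V x u" using some_coset[OF U x] by blast
  obtain u' where u': "u' \<in> U" "(SOME z. z \<in> coset V U y) = vadd V y u'" using some_coset[OF U y] by blast
  have "vadd (quot V U) (coset V U x) (coset V U y) = coset V U (vadd V (vadd V x u) (vadd V y u'))"
    using u u' by (simp add: quot_def)
  also have "vadd V (vadd V x u) (vadd V y u') = vadd V (vadd V x y) (vadd V u u')"
    using add_swap4 x y u u' S(1) by blast
  also have "coset V U \<dots> = coset V U (vadd V x y)"
    using coset_shift[OF U _ S(3)[OF u(1) u'(1)]] x y by simp
  finally show ?thesis .
qed

lemma quot_sm:
  assumes U: "subspace_of V U" and x: "x \<in> vcarrier V"
  shows "vsmult (quot V U) a (coset V U x) = coset V U (vsmult V a x)"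
proof -
  note S = sub_facts[OF U]
  obtain u where u: "u \<in> U" "(SOME z. z \<in> coset V U x) = vadd V x u" using some_coset[OF U x] by blast
  have "vsmult (quot V U) a (coset V U x) = coset V U (vsmult V a (vadd V x u))"
    using u by (simp add: quot_def)
  also have "vsmult V a (vadd V x u) = vadd V (vsmult V a x) (vsmult V a u)"
    using sm_rdist x u S(1) by blast
  also have "coset V U \<dots> = coset V U (vsmult V a x)"
    using coset_shift[OF U _ S(4)[OF u(1)]] x by simp
  finally show ?thesis .
qed

lemma quot_simps: "vzero (quot V U) = coset V U (vzero V)" "vcarrier (quot V U) = coset V U ` vcarrier V"
  by (simp_all add: quot_def)

lemma coset_zero_iff:
  assumes U: "subspace_of V U" and x: "x \<in> vcarrier V"
  shows "coset V U x = coset V U (vzero V) \<longleftrightarrow> x \<in> U"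
proof
  assume e: "coset V U x = coset V U (vzero V)"
  have "x \<in> coset V U (vzero V)" using coset_self[OF U x] e by simp
  then obtain u where "u \<in> U" "x = vadd V (vzero V) u" by (auto simp: coset_def)
  thus "x \<in> U" using sub_facts(1)[OF U] by auto
next
  assume "x \<in> U"
  from coset_shift[OF U zero_in this] show "coset V U x = coset V U (vzero V)" using x by simp
qed

end

definition Bf :: "('k::field, 'v) vspace \<Rightarrow> nat \<Rightarrow> (nat \<Rightarrow> 'k) \<Rightarrow> (nat \<Rightarrow> 'v) \<Rightarrow> 'v" where
  "Bf V r a t = vsum V (\<lambda>i. vsmult V (a i) (t i)) r"

context vsp
begin

lemma Bf_cl: "(\<And>i. i < r \<Longrightarrow> t i \<in> vcarrier V) \<Longrightarrow> Bf V r a t \<in> vcarrier V"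
  unfolding Bf_def by (rule vsum_cl) simp

lemma Bf_add_left: "(\<And>i. i < r \<Longrightarrow> t i \<in> vcarrier V) \<Longrightarrow>
    Bf V r (a + b) t = vadd V (Bf V r a t) (Bf V r b t)"
  unfolding Bf_def by (subst vsum_add[symmetric]) (auto intro!: vsum_cong simp: sm_ldist)

lemma Bf_scl_left: "(\<And>i. i < r \<Longrightarrow> t i \<in> vcarrier V) \<Longrightarrow>
    Bf V r (scl c a) t = vsmult V c (Bf V r a t)"
  unfolding Bf_def by (subst vsum_sm) (auto intro!: vsum_cong simp: sm_assoc)

lemma Bf_zero_left: "(\<And>i. i < r \<Longrightarrow> t i \<in> vcarrier V) \<Longrightarrow> Bf V r 0 t = vzero V"
  unfolding Bf_def by (subst vsum_zero[symmetric]) (auto intro!: vsum_cong)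

lemma Bf_sum_left:
  assumes t: "\<And>i. i < r \<Longrightarrow> t i \<in> vcarrier V"
  shows "Bf V r (\<Sum>j<d. scl (lam j) (c j)) t = vsum V (\<lambda>j. vsmult V (lam j) (Bf V r (c j) t)) d"
proof (induct d)
  case 0
  have "Bf V r 0 t = vzero V" by (rule Bf_zero_left) (rule t)
  thus ?case by (simp add: zero_fun_def)
next
  case (Suc d)
  have "Bf V r (\<Sum>j<Suc d. scl (lam j) (c j)) t
     = Bf V r ((\<Sum>j<d. scl (lam j) (c j)) + scl (lam d) (c d)) t" by simp
  also have "\<dots> = vadd V (Bf V r (\<Sum>j<d. scl (lam j) (c j)) t) (Bf V r (scl (lam d) (c d)) t)"
    by (rule Bf_add_left) (rule t)
  also have "Bf V r (scl (lam d) (c d)) t = vsmult V (lam d) (Bf V r (c d) t)"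
    by (rule Bf_scl_left) (rule t)
  finally show ?case using Suc by simp
qed

lemma Bf_unitv:
  assumes t: "\<And>i. i < r \<Longrightarrow> t i \<in> vcarrier V" and i: "i < r"
  shows "Bf V r (unitv i) t = t i"
proof -
  have "Bf V r (unitv i) t = vsmult V (unitv i i) (t i)"
    unfolding Bf_def by (rule vsum_delta[OF i]) (auto simp: unitv_def t i)
  thus ?thesis using t[OF i] by (simp add: unitv_def)
qed

lemma Bf_add_right: "(\<And>i. i < r \<Longrightarrow> s i \<in> vcarrier V) \<Longrightarrow> (\<And>i. i < r \<Longrightarrow> t i \<in> vcarrier V) \<Longrightarrow>
    Bf V r a (\<lambda>i. vadd V (s i) (t i)) = vadd V (Bf V r a s) (Bf V r a t)"
  unfolding Bf_def by (subst vsum_add[symmetric]) (auto intro!: vsum_cong simp: sm_rdist)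

lemma Bf_sm_right: "(\<And>i. i < r \<Longrightarrow> t i \<in> vcarrier V) \<Longrightarrow>
    Bf V r a (\<lambda>i. vsmult V c (t i)) = vsmult V c (Bf V r a t)"
  unfolding Bf_def by (subst vsum_sm) (auto intro!: vsum_cong simp: sm_assoc mult.commute)

lemma Bf_zero_right: "Bf V r a (\<lambda>i. vzero V) = vzero V"
  unfolding Bf_def by (simp add: vsum_zero)

lemma Bf_gen: "m \<in> vcarrier V \<Longrightarrow> Bf V r a (\<lambda>i. vsmult V (b i) m) = vsmult V (dot r a b) m"
  unfolding Bf_def dot_def by (simp add: sm_assoc vsum_sm_left)

lemma orth:
  assumes US: "U \<subseteq> Sr r" and aU: "\<forall>b\<in>U. dot r a b = 0"
    and t: "t \<in> vspan (vpow r V) {\<lambda>i. vsmult V (b i) m | b m. b \<in> U \<and> m \<in> vcarrier V}"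
  shows "t \<in> vcarrier (vpow r V) \<and> Bf V r a t = vzero V"
  using t
proof (induct rule: vspan.induct)
  case span_zero
  show ?case by (simp add: vpow_simps Bf_zero_right)
next
  case (span_gen x)
  then obtain b m where bm: "b \<in> U" "m \<in> vcarrier V" "x = (\<lambda>i. vsmult V (b i) m)" by blast
  have "b \<in> Sr r" using bm US by blast
  hence "x \<in> vcarrier (vpow r V)" using bm by (auto simp: vpow_simps Sr_def)
  moreover have "Bf V r a x = vzero V" using bm aU by (simp add: Bf_gen)
  ultimately show ?case by simp
next
  case (span_add x y)
  have xc: "\<And>i. x i \<in> vcarrier V" "\<And>i. y i \<in> vcarrier V" using span_add vpow_mem_all by blast+
  have "vadd (vpow r V) x y \<in> vcarrier (vpow r V)" using span_add vsp.add_cl[OF vsp_vpow] by blast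
  moreover have "Bf V r a (vadd (vpow r V) x y) = vzero V"
    using span_add xc by (simp add: vpow_simps Bf_add_right)
  ultimately show ?case by simp
next
  case (span_smult x c)
  have xc: "\<And>i. x i \<in> vcarrier V" using span_smult vpow_mem_all by blast+
  have "vsmult (vpow r V) c x \<in> vcarrier (vpow r V)" using span_smult vsp.sm_cl[OF vsp_vpow] by blast
  moreover have "Bf V r a (vsmult (vpow r V) c x) = vzero V"
    using span_smult xc by (simp add: vpow_simps Bf_sm_right)
  ultimately show ?case by simp
qed

lemma tens_vsum:
  assumes "\<And>j. j < d \<Longrightarrow> b j \<in> U \<and> m j \<in> vcarrier V"
  shows "vsum (vpow r V) (\<lambda>j i. vsmult V (b j i) (m j)) d
     \<in> vspan (vpow r V) {\<lambda>i. vsmult V (b i) m | b m. b \<in> U \<and> m \<in> vcarrier V}"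
  using assms
proof (induct d)
  case 0 thus ?case by (simp add: vspan.span_zero)
next
  case (Suc d)
  have "(\<lambda>i. vsmult V (b d i) (m d)) \<in> {\<lambda>i. vsmult V (b i) m | b m. b \<in> U \<and> m \<in> vcarrier V}"
    using Suc.prems by blast
  thus ?case using Suc by (simp add: vspan.span_add vspan.span_gen)
qed

end


lemma vsp_kline: "vsp (kline :: ('k::field, 'k) vspace)"
  by (rule vsp.intro) (auto simp: vs_ax_def kline_def algebra_simps intro: exI[of _ "- _"])

lemma vsp_Ar: "vsp (Ar r :: ('k::field, nat \<Rightarrow> 'k) vspace)"
  unfolding Ar_def by (rule vsp.vsp_vpow[OF vsp_kline])

definition PW :: "nat \<Rightarrow> ('k::field, 'v, 'w) krep \<Rightarrow> (nat \<Rightarrow> 'k) set \<Rightarrow> bool" where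
  "PW r M W \<longleftrightarrow> (\<forall>t. t \<in> vcarrier (vpow r (rep1 M)) \<longrightarrow> psi r M t = vzero (rep2 M) \<longrightarrow>
      (\<forall>a\<in>W. Bf (rep1 M) r a t = vzero (rep1 M)) \<longrightarrow> t = (\<lambda>_. vzero (rep1 M)))"

lemma sigma_simps:
  "vcarrier (rep1 (sigma r M)) = {t \<in> vcarrier (vpow r (rep1 M)). psi r M t = vzero (rep2 M)}"
  "vzero (rep1 (sigma r M)) = (\<lambda>_. vzero (rep1 M))"
  "vadd (rep1 (sigma r M)) = (\<lambda>s t i. vadd (rep1 M) (s i) (t i))"
  "vsmult (rep1 (sigma r M)) = (\<lambda>a t i. vsmult (rep1 M) a (t i))"
  "rep2 (sigma r M) = rep1 M"
  "rmap (sigma r M) i t = t i"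
  by (simp_all add: sigma_def vpow_simps)

lemma Cw_simps:
  "rep1 (Cw r W) = kline"
  "rep2 (Cw r W) = quot (Ar r) W"
  "rmap (Cw r W) i c = coset (Ar r) W (scl c (unitv i))"
  by (simp_all add: Cw_def Ar_simps)

lemma kline_simps: "vcarrier kline = UNIV" "vzero kline = 0" "vadd kline = (+)" "vsmult kline = (*)"
  by (simp_all add: kline_def)

context
  fixes r :: nat and M :: "('k::field, 'v, 'w) krep"
  assumes rep: "is_rep r M"
begin

lemma M1: "vsp (rep1 M)" using rep by (auto simp: is_rep_def intro: vsp.intro fd_vs_ax)
lemma M2: "vsp (rep2 M)" using rep by (auto simp: is_rep_def intro: vsp.intro fd_vs_ax)
lemma gam: "i < r \<Longrightarrow> lin_map (rep1 M) (rep2 M) (rmap M i)" using rep by (auto simp: is_rep_def)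

lemma gam_cl: "i < r \<Longrightarrow> x \<in> vcarrier (rep1 M) \<Longrightarrow> rmap M i x \<in> vcarrier (rep2 M)"
  using gam by (auto simp: lin_map_def)
lemma gam_add: "i < r \<Longrightarrow> x \<in> vcarrier (rep1 M) \<Longrightarrow> y \<in> vcarrier (rep1 M) \<Longrightarrow>
   rmap M i (vadd (rep1 M) x y) = vadd (rep2 M) (rmap M i x) (rmap M i y)"
  using gam by (auto simp: lin_map_def)
lemma gam_sm: "i < r \<Longrightarrow> x \<in> vcarrier (rep1 M) \<Longrightarrow>
   rmap M i (vsmult (rep1 M) a x) = vsmult (rep2 M) a (rmap M i x)"
  using gam by (auto simp: lin_map_def)
lemma gam_zero: "i < r \<Longrightarrow> rmap M i (vzero (rep1 M)) = vzero (rep2 M)"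
  using lin_map_zero[OF M1 M2 gam] by simp

lemma psi_cl: "t \<in> vcarrier (vpow r (rep1 M)) \<Longrightarrow> psi r M t \<in> vcarrier (rep2 M)"
  unfolding psi_def by (rule vsp.vsum_cl[OF M2]) (simp add: gam_cl vsp.vpow_mem_all[OF M1])

lemma psi_add: "s \<in> vcarrier (vpow r (rep1 M)) \<Longrightarrow> t \<in> vcarrier (vpow r (rep1 M)) \<Longrightarrow>
   psi r M (\<lambda>i. vadd (rep1 M) (s i) (t i)) = vadd (rep2 M) (psi r M s) (psi r M t)"
  unfolding psi_def
  by (subst vsp.vsum_add[OF M2, symmetric])
     (auto intro!: vsp.vsum_cong[OF M2] simp: gam_add gam_cl vsp.vpow_mem_all[OF M1])

lemma psi_sm: "t \<in> vcarrier (vpow r (rep1 M)) \<Longrightarrow>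
   psi r M (\<lambda>i. vsmult (rep1 M) c (t i)) = vsmult (rep2 M) c (psi r M t)"
  unfolding psi_def
  by (subst vsp.vsum_sm[OF M2])
     (auto intro!: vsp.vsum_cong[OF M2] simp: gam_sm gam_cl vsp.vpow_mem_all[OF M1])

lemma psi_zero: "psi r M (\<lambda>_. vzero (rep1 M)) = vzero (rep2 M)"
  unfolding psi_def
  by (subst vsp.vsum_zero[OF M2, symmetric]) (auto intro!: vsp.vsum_cong[OF M2] simp: gam_zero)

lemma hom_iff:
  assumes WS: "W \<subseteq> Sr r" and Wsub: "fv.subspace W"
  shows "hom_zero r (Cw r W) (sigma r M) \<longleftrightarrow> PW r M W"
proof -
  have subW: "subspace_of (Ar r) W" using WS Wsub by (simp add: subspace_of_Ar)
  note A = vsp_Ar[of r]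
  note Aq = vsp.quot_add[OF A subW] vsp.quot_sm[OF A subW] vsp.quot_simps[OF A, of W]
  note V1 = M1
  show ?thesis
  proof
    assume hz: "hom_zero r (Cw r W) (sigma r M)"
    show "PW r M W" unfolding PW_def
    proof (intro allI impI)
      fix t assume t: "t \<in> vcarrier (vpow r (rep1 M))" and pt: "psi r M t = vzero (rep2 M)"
        and ort: "\<forall>a\<in>W. Bf (rep1 M) r a t = vzero (rep1 M)"
      have tc: "\<And>i. t i \<in> vcarrier (rep1 M)" using vsp.vpow_mem_all[OF M1 t] .
      have Bcl: "\<And>a. Bf (rep1 M) r a t \<in> vcarrier (rep1 M)"
        by (rule vsp.Bf_cl[OF M1]) (rule tc)
      have Badd: "\<And>a b. Bf (rep1 M) r (a + b) t = vadd (rep1 M) (Bf (rep1 M) r a t) (Bf (rep1 M) r b t)"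
        by (rule vsp.Bf_add_left[OF M1]) (rule tc)
      have Bscl: "\<And>c a. Bf (rep1 M) r (scl c a) t = vsmult (rep1 M) c (Bf (rep1 M) r a t)"
        by (rule vsp.Bf_scl_left[OF M1]) (rule tc)
      have Bunit: "\<And>i. i < r \<Longrightarrow> Bf (rep1 M) r (unitv i) t = t i"
        by (rule vsp.Bf_unitv[OF M1]) (rule tc)
      define f1 where "f1 = (\<lambda>c::'k. \<lambda>i. vsmult (rep1 M) c (t i))"
      define f2 where "f2 = (\<lambda>X. Bf (rep1 M) r (SOME a. a \<in> X) t)"
      have f2c: "f2 (coset (Ar r) W a) = Bf (rep1 M) r a t" if a: "a \<in> Sr r" for a
      proof -
        obtain u where u: "u \<in> W" "(SOME z. z \<in> coset (Ar r) W a) = vadd (Ar r) a u"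
          using vsp.some_coset[OF A subW, of a] a by (auto simp: Ar_simps)
        have "f2 (coset (Ar r) W a) = Bf (rep1 M) r (a + u) t" using u by (simp add: f2_def Ar_simps)
        also have "\<dots> = vadd (rep1 M) (Bf (rep1 M) r a t) (Bf (rep1 M) r u t)"
          by (rule Badd)
        also have "\<dots> = Bf (rep1 M) r a t" using ort u by (simp add: vsp.add_zero[OF M1 Bcl])
        finally show ?thesis .
      qed
      have f1k: "f1 c \<in> vcarrier (rep1 (sigma r M))" for c
      proof -
        have "f1 c = vsmult (vpow r (rep1 M)) c t" by (simp add: f1_def vpow_simps)
        hence "f1 c \<in> vcarrier (vpow r (rep1 M))" using vsp.sm_cl[OF vsp.vsp_vpow[OF M1] t] by simp
        moreover have "psi r M (f1 c) = vzero (rep2 M)"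
          unfolding f1_def using psi_sm[OF t] pt vsp.sm_zero_right[OF M2] by simp
        ultimately show ?thesis by (simp add: sigma_simps)
      qed
      have mor: "is_mor r (Cw r W) (sigma r M) f1 f2"
        unfolding is_mor_def
      proof (intro conjI)
        show "lin_map (rep1 (Cw r W)) (rep1 (sigma r M)) f1"
          unfolding lin_map_def Cw_simps kline_simps
          using f1k tc by (auto simp: sigma_simps f1_def fun_eq_iff vsp.sm_ldist[OF M1] vsp.sm_assoc[OF M1])
        show "lin_map (rep2 (Cw r W)) (rep2 (sigma r M)) f2"
          unfolding lin_map_def Cw_simps sigma_simps
        proof (intro conjI ballI allI)
          fix X assume "X \<in> vcarrier (quot (Ar r) W)"
          then obtain a where a: "a \<in> Sr r" "X = coset (Ar r) W a" by (auto simp: Aq Ar_simps)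
          show "f2 X \<in> vcarrier (rep1 M)" using a f2c Bcl by simp
        next
          fix X Y assume "X \<in> vcarrier (quot (Ar r) W)" "Y \<in> vcarrier (quot (Ar r) W)"
          then obtain a b where a: "a \<in> Sr r" "X = coset (Ar r) W a" and b: "b \<in> Sr r" "Y = coset (Ar r) W b"
            by (auto simp: Aq Ar_simps)
          have ab: "a + b \<in> Sr r" using a b by (simp add: fv.subspace_add[OF subspace_Sr])
          show "f2 (vadd (quot (Ar r) W) X Y) = vadd (rep1 M) (f2 X) (f2 Y)"
            using a b ab Aq(1)[of a b] by (simp add: Ar_simps f2c Badd)
        next
          fix c X assume "X \<in> vcarrier (quot (Ar r) W)"
          then obtain a where a: "a \<in> Sr r" "X = coset (Ar r) W a" by (auto simp: Aq Ar_simps)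
          have ca: "scl c a \<in> Sr r" using a by (simp add: fv.subspace_scale[OF subspace_Sr])
          show "f2 (vsmult (quot (Ar r) W) c X) = vsmult (rep1 M) c (f2 X)"
            using a ca Aq(2)[of a c] by (simp add: Ar_simps f2c Bscl)
        qed
        show "\<forall>i<r. \<forall>x\<in>vcarrier (rep1 (Cw r W)). f2 (rmap (Cw r W) i x) = rmap (sigma r M) i (f1 x)"
        proof (intro allI impI ballI)
          fix i and x :: 'k assume i: "i < r"
          have "scl x (unitv i) \<in> Sr r" using i by (auto simp: Sr_def unitv_def)
          hence "f2 (coset (Ar r) W (scl x (unitv i))) = Bf (rep1 M) r (scl x (unitv i)) t" by (rule f2c)
          also have "\<dots> = vsmult (rep1 M) x (t i)"
            using Bscl Bunit[OF i] by simp
          finally show "f2 (rmap (Cw r W) i x) = rmap (sigma r M) i (f1 x)"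
            by (simp add: Cw_simps sigma_simps f1_def)
        qed
      qed
      from hz mor have "f1 1 = vzero (rep1 (sigma r M))" by (auto simp: hom_zero_def Cw_simps kline_simps)
      moreover have "f1 1 = t" using tc by (simp add: f1_def vsp.sm_one[OF M1])
      ultimately show "t = (\<lambda>_. vzero (rep1 M))" by (simp add: sigma_simps)
    qed
  next
    assume pw: "PW r M W"
    show "hom_zero r (Cw r W) (sigma r M)" unfolding hom_zero_def
    proof (intro allI impI)
      fix f1 f2 assume mor: "is_mor r (Cw r W) (sigma r M) f1 f2"
      have l1: "lin_map kline (rep1 (sigma r M)) f1" using mor by (simp add: is_mor_def Cw_simps)
      have l2: "lin_map (quot (Ar r) W) (rep1 M) f2" using mor by (simp add: is_mor_def Cw_simps sigma_simps)
      have cp: "\<And>i x. i < r \<Longrightarrow> f2 (coset (Ar r) W (scl x (unitv i))) = f1 x i"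
        using mor by (simp add: is_mor_def Cw_simps sigma_simps kline_simps)
      define t where "t = f1 1"
      have tk: "t \<in> vcarrier (rep1 (sigma r M))" using l1 by (simp add: lin_map_def t_def kline_simps)
      hence t: "t \<in> vcarrier (vpow r (rep1 M))" and pt: "psi r M t = vzero (rep2 M)"
        by (simp_all add: sigma_simps)
      have tc: "\<And>i. t i \<in> vcarrier (rep1 M)" using vsp.vpow_mem_all[OF M1 t] .
      have Bcl: "\<And>a. Bf (rep1 M) r a t \<in> vcarrier (rep1 M)"
        by (rule vsp.Bf_cl[OF M1]) (rule tc)
      have Badd: "\<And>a b. Bf (rep1 M) r (a + b) t = vadd (rep1 M) (Bf (rep1 M) r a t) (Bf (rep1 M) r b t)"
        by (rule vsp.Bf_add_left[OF M1]) (rule tc)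
      have Bscl: "\<And>c a. Bf (rep1 M) r (scl c a) t = vsmult (rep1 M) c (Bf (rep1 M) r a t)"
        by (rule vsp.Bf_scl_left[OF M1]) (rule tc)
      have Bunit: "\<And>i. i < r \<Longrightarrow> Bf (rep1 M) r (unitv i) t = t i"
        by (rule vsp.Bf_unitv[OF M1]) (rule tc)
      have f1x: "f1 x = (\<lambda>i. vsmult (rep1 M) x (t i))" for x
      proof -
        have "\<forall>a y. f1 (a * y) = vsmult (rep1 (sigma r M)) a (f1 y)" using l1 by (simp add: lin_map_def kline_simps)
        hence "f1 (x * 1) = vsmult (rep1 (sigma r M)) x (f1 1)" by blast
        thus ?thesis by (simp add: sigma_simps t_def)
      qed
      have f2mem: "\<And>X. X \<in> vcarrier (quot (Ar r) W) \<Longrightarrow> f2 X \<in> vcarrier (rep1 M)"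
        using l2 by (simp add: lin_map_def)
      have f2add: "\<And>X Y. X \<in> vcarrier (quot (Ar r) W) \<Longrightarrow> Y \<in> vcarrier (quot (Ar r) W) \<Longrightarrow>
          f2 (vadd (quot (Ar r) W) X Y) = vadd (rep1 M) (f2 X) (f2 Y)"
        using l2 by (simp add: lin_map_def)
      have f2sm: "\<And>X c. X \<in> vcarrier (quot (Ar r) W) \<Longrightarrow>
          f2 (vsmult (quot (Ar r) W) c X) = vsmult (rep1 M) c (f2 X)"
        using l2 by (simp add: lin_map_def)
      have cmem: "\<And>a. a \<in> Sr r \<Longrightarrow> coset (Ar r) W a \<in> vcarrier (quot (Ar r) W)"
        by (simp add: Aq Ar_simps)
      have z0: "f2 (coset (Ar r) W 0) = vzero (rep1 M)"
      proof -
        have 0: "(0::nat\<Rightarrow>'k) \<in> Sr r" by (simp add: Sr_def)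
        have "f2 (coset (Ar r) W 0) = f2 (vsmult (quot (Ar r) W) 0 (coset (Ar r) W 0))"
          using Aq(2)[of 0 0] 0 by (simp add: Ar_simps scl_def zero_fun_def)
        also have "\<dots> = vsmult (rep1 M) 0 (f2 (coset (Ar r) W 0))" using f2sm cmem[OF 0] by simp
        also have "\<dots> = vzero (rep1 M)" using f2mem[OF cmem[OF 0]] vsp.sm_zero_left[OF M1] by simp
        finally show ?thesis .
      qed
      have psum: "n \<le> r \<Longrightarrow> f2 (coset (Ar r) W (\<Sum>i<n. scl (a i) (unitv i)))
                  = vsum (rep1 M) (\<lambda>i. vsmult (rep1 M) (a i) (t i)) n" for n a
      proof (induct n)
        case 0 thus ?case using z0 by (simp add: zero_fun_def)
      next
        case (Suc n)
        have s1: "(\<Sum>i<n. scl (a i) (unitv i)) \<in> Sr r"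
          by (rule fv.subspace_sum[OF subspace_Sr]) (use Suc.prems in \<open>auto simp: Sr_def unitv_def\<close>)
        have s2: "scl (a n) (unitv n) \<in> Sr r" using Suc.prems by (auto simp: Sr_def unitv_def)
        have "f2 (coset (Ar r) W (\<Sum>i<Suc n. scl (a i) (unitv i)))
             = f2 (vadd (quot (Ar r) W) (coset (Ar r) W (\<Sum>i<n. scl (a i) (unitv i))) (coset (Ar r) W (scl (a n) (unitv n))))"
          using Aq(1)[OF _ _] s1 s2 by (simp add: Ar_simps)
        also have "\<dots> = vadd (rep1 M) (f2 (coset (Ar r) W (\<Sum>i<n. scl (a i) (unitv i)))) (f2 (coset (Ar r) W (scl (a n) (unitv n))))"
          using f2add cmem s1 s2 by simp
        also have "f2 (coset (Ar r) W (scl (a n) (unitv n))) = vsmult (rep1 M) (a n) (t n)"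
          using cp[of n "a n"] Suc.prems f1x by simp
        finally show ?case using Suc by simp
      qed
      have f2a: "f2 (coset (Ar r) W a) = Bf (rep1 M) r a t" if a: "a \<in> Sr r" for a
        using psum[of r a] Sr_sum_unitv[OF a] by (simp add: Bf_def)
      have "\<forall>a\<in>W. Bf (rep1 M) r a t = vzero (rep1 M)"
      proof
        fix a assume aW: "a \<in> W"
        hence a: "a \<in> Sr r" using WS by blast
        have "coset (Ar r) W a = coset (Ar r) W 0"
          using vsp.coset_zero_iff[OF A subW, of a] a aW by (simp add: Ar_simps)
        thus "Bf (rep1 M) r a t = vzero (rep1 M)" using f2a[OF a] z0 by simp
      qed
      hence t0: "t = (\<lambda>_. vzero (rep1 M))" using pw t pt by (simp add: PW_def)
      show "(\<forall>x\<in>vcarrier (rep1 (Cw r W)). f1 x = vzero (rep1 (sigma r M))) \<and>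
            (\<forall>y\<in>vcarrier (rep2 (Cw r W)). f2 y = vzero (rep2 (sigma r M)))"
      proof (intro conjI ballI)
        fix x show "f1 x = vzero (rep1 (sigma r M))"
          using t0 f1x by (simp add: sigma_simps vsp.sm_zero_right[OF M1])
      next
        fix y assume "y \<in> vcarrier (rep2 (Cw r W))"
        then obtain a where a: "a \<in> Sr r" "y = coset (Ar r) W a" by (auto simp: Cw_simps Aq Ar_simps)
        show "f2 y = vzero (rep2 (sigma r M))"
          using f2a[OF a(1)] a(2) t0 by (simp add: sigma_simps vsp.Bf_zero_right[OF M1])
      qed
    qed
  qed
qed

end


lemma GrF1:
  assumes "W \<in> GrF r 1"
  shows "\<exists>b\<in>Sr r. b \<noteq> 0 \<and> W = fv.span {b}"
proof -
  from assms obtain B where B: "finite B" "card B = 1" "B \<subseteq> W" "fv.independent B" "fv.span B = W"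
    "W \<subseteq> Sr r" by (auto simp: GrF_def)
  from B(2) obtain b where b: "B = {b}" by (auto simp: card_1_singleton_iff)
  have "b \<noteq> 0" using B(4) b by simp
  thus ?thesis using b B by auto
qed

context
  fixes r :: nat and M :: "('k::field, 'v, 'w) krep"
  assumes rep: "is_rep r M"
begin

lemmas MB_M1 = M1[OF rep] and MB_M2 = M2[OF rep]
lemmas MB_psi_zero = psi_zero[OF rep] and MB_psi_sm = psi_sm[OF rep] and MB_psi_add = psi_add[OF rep]

lemma repproj_iff:
  assumes d: "d \<le> r"
  shows "rep_proj r d M \<longleftrightarrow> (\<forall>W\<in>GrF r (r - d). PW r M W)"
proof
  assume rp: "rep_proj r d M"
  show "\<forall>W\<in>GrF r (r - d). PW r M W"
  proof (intro ballI, unfold PW_def, intro allI impI)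
    fix W t assume W: "W \<in> GrF r (r - d)" and t: "t \<in> vcarrier (vpow r (rep1 M))"
      and pt: "psi r M t = vzero (rep2 M)" and ort: "\<forall>a\<in>W. Bf (rep1 M) r a t = vzero (rep1 M)"
    have tc: "\<And>i. t i \<in> vcarrier (rep1 M)" using vsp.vpow_mem_all[OF MB_M1 t] .
    have Bcl: "\<And>a. Bf (rep1 M) r a t \<in> vcarrier (rep1 M)"
      by (rule vsp.Bf_cl[OF MB_M1]) (rule tc)
    have Badd: "\<And>a b. Bf (rep1 M) r (a + b) t = vadd (rep1 M) (Bf (rep1 M) r a t) (Bf (rep1 M) r b t)"
      by (rule vsp.Bf_add_left[OF MB_M1]) (rule tc)
    have Bunit: "\<And>i. i < r \<Longrightarrow> Bf (rep1 M) r (unitv i) t = t i"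
      by (rule vsp.Bf_unitv[OF MB_M1]) (rule tc)
    have Bsum: "\<And>lam c d. Bf (rep1 M) r (\<Sum>j<d. scl (lam j) (c j)) t
        = vsum (rep1 M) (\<lambda>j. vsmult (rep1 M) (lam j) (Bf (rep1 M) r (c j) t)) d"
      by (rule vsp.Bf_sum_left[OF MB_M1]) (rule tc)
    define v where "v = perp r W"
    have v: "v \<in> GrF r d" using LA3[OF W] d by (simp add: v_def)
    obtain p where p: "inj_on p {..<d}" "fv.independent (p ` {..<d})" "\<forall>l<d. p l \<in> Sr r"
      "fv.span (p ` {..<d}) = v"
      by (rule GrF_basis[OF v])
    obtain c where c: "\<forall>j<d. c j \<in> Sr r \<and> (\<forall>l<d. dot r (p l) (c j) = (if l = j then 1 else 0))"
      using dual_all[OF p(1-3)] by blast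
    have Wpp: "perp r v = W" using LA5[OF W] by (simp add: v_def)
    define m where "m = (\<lambda>j. Bf (rep1 M) r (c j) t)"
    have pv: "\<And>j. j < d \<Longrightarrow> p j \<in> v" using p(4) fv.span_base[of _ "p ` {..<d}"] by blast
    have mem: "vsum (vpow r (rep1 M)) (\<lambda>j i. vsmult (rep1 M) (p j i) (m j)) d \<in> tens r v M"
      unfolding tens_def by (rule vsp.tens_vsum[OF MB_M1]) (auto simp: pv m_def Bcl)
    have eq: "t = vsum (vpow r (rep1 M)) (\<lambda>j i. vsmult (rep1 M) (p j i) (m j)) d"
    proof
      fix i
      show "t i = vsum (vpow r (rep1 M)) (\<lambda>j i. vsmult (rep1 M) (p j i) (m j)) d i"
      proof (cases "i < r")
        case True
        define x where "x = unitv i - (\<Sum>j<d. scl (p j i) (c j))"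
        have xS: "x \<in> Sr r" using True c by (auto simp: x_def Sr_def unitv_def sum_fun_apply)
        have "dot r (p l) x = 0" if l: "l < d" for l
        proof -
          have "dot r (p l) (\<Sum>j<d. scl (p j i) (c j)) = (\<Sum>j<d. p j i * dot r (p l) (c j))"
            by (simp add: dot_sum_right dot_scl_right)
          also have "\<dots> = (\<Sum>j<d. if l = j then p j i else 0)"
            using c l by (intro sum.cong) auto
          also have "\<dots> = p l i" using l by simp
          finally show ?thesis by (simp add: x_def dot_diff_right dot_unitv_right[OF True])
        qed
        hence "x \<in> perp r v" using perp_basis[of r p d] p(4) xS by auto
        hence "x \<in> W" using Wpp by simp
        hence Bx: "Bf (rep1 M) r x t = vzero (rep1 M)" using ort by blast
        have "unitv i = x + (\<Sum>j<d. scl (p j i) (c j))" by (simp add: x_def)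
        hence "t i = Bf (rep1 M) r (x + (\<Sum>j<d. scl (p j i) (c j))) t" using Bunit[OF True] by simp
        also have "\<dots> = vadd (rep1 M) (vzero (rep1 M)) (vsum (rep1 M) (\<lambda>j. vsmult (rep1 M) (p j i) (m j)) d)"
          by (simp add: Badd Bx Bsum m_def)
        also have "\<dots> = vsum (rep1 M) (\<lambda>j. vsmult (rep1 M) (p j i) (m j)) d"
          by (rule vsp.zero_add[OF MB_M1], rule vsp.vsum_cl[OF MB_M1]) (simp add: m_def Bcl vsp.sm_cl[OF MB_M1])
        finally show ?thesis by (simp add: vsum_vpow_apply)
      next
        case False
        have "vsum (rep1 M) (\<lambda>j. vsmult (rep1 M) (p j i) (m j)) d = vsum (rep1 M) (\<lambda>j. vzero (rep1 M)) d"
          using False p(3) by (intro vsp.vsum_cong[OF MB_M1]) (auto simp: Sr_def m_def Bcl vsp.sm_zero_left[OF MB_M1])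
        also have "\<dots> = vzero (rep1 M)" by (rule vsp.vsum_zero[OF MB_M1])
        also have "\<dots> = t i" using t False by (simp add: vpow_simps)
        finally show ?thesis by (simp add: vsum_vpow_apply)
      qed
    qed
    have "t \<in> tens r v M" using mem eq by simp
    moreover have "v \<in> Gr (Ar r) d" using v by (simp add: Gr_Ar)
    ultimately have "t = vzero (vpow r (rep1 M))" using rp pt by (auto simp: rep_proj_def)
    thus "t = (\<lambda>_. vzero (rep1 M))" by (simp add: vpow_simps)
  qed
next
  assume pw: "\<forall>W\<in>GrF r (r - d). PW r M W"
  show "rep_proj r d M" unfolding rep_proj_def Gr_Ar
  proof (intro ballI impI)
    fix U t assume U: "U \<in> GrF r d" and t: "t \<in> tens r U M" and pt: "psi r M t = vzero (rep2 M)"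
    have W: "perp r U \<in> GrF r (r - d)" by (rule LA3[OF U])
    have US: "U \<subseteq> Sr r" using U by (simp add: GrF_def)
    have o: "t \<in> vcarrier (vpow r (rep1 M)) \<and> Bf (rep1 M) r a t = vzero (rep1 M)" if a: "a \<in> perp r U" for a
      by (rule vsp.orth[OF MB_M1 US _ t[unfolded tens_def]]) (use a in \<open>auto simp: perp_def\<close>)
    have tmem: "t \<in> vcarrier (vpow r (rep1 M))"
      using o[of 0] by (simp add: perp_def Sr_def dot_def)
    have "t = (\<lambda>_. vzero (rep1 M))" using pw W tmem pt o by (auto simp: PW_def)
    thus "t = vzero (vpow r (rep1 M))" by (simp add: vpow_simps)
  qed
qed

end


context
  fixes r :: nat and M :: "('k::field, 'v, 'w) krep"
  assumes rep: "is_rep r M"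
begin

lemmas MC_M1 = M1[OF rep] and MC_M2 = M2[OF rep]
lemmas MC_psi_zero = psi_zero[OF rep] and MC_psi_sm = psi_sm[OF rep] and MC_psi_add = psi_add[OF rep]

lemma ekp_iff:
  assumes r1: "1 \<le> r"
  shows "rep_proj r (r - 1) M \<longleftrightarrow> EKP r (sigma r M)"
proof -
  have rp: "rep_proj r (r - 1) M \<longleftrightarrow> (\<forall>W\<in>GrF r 1. PW r M W)"
    using repproj_iff[OF rep, of "r - 1"] r1 by simp
  let ?K = "rep1 (sigma r M)"
  have Kz: "vzero (vpow r ?K) = (\<lambda>_ _. vzero (rep1 M))" by (simp add: vpow_simps sigma_simps)
  have psiS: "psi r (sigma r M) s = vsum (rep1 M) (\<lambda>i. s i i) r" for s
    by (simp add: psi_def sigma_simps)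
  have "(\<forall>W\<in>GrF r 1. PW r M W) \<longleftrightarrow> EKP r (sigma r M)"
  proof
    assume pw: "\<forall>W\<in>GrF r 1. PW r M W"
    show "EKP r (sigma r M)" unfolding EKP_def rep_proj_def Gr_Ar
    proof (intro ballI impI)
      fix U s assume U: "U \<in> GrF r 1" and s: "s \<in> tens r U (sigma r M)"
        and ps: "psi r (sigma r M) s = vzero (rep2 (sigma r M))"
      obtain b where b: "b \<in> Sr r" "b \<noteq> 0" "U = fv.span {b}" using GrF1[OF U] by blast
      have "\<exists>t. t \<in> vcarrier ?K \<and> s = (\<lambda>i j. vsmult (rep1 M) (b i) (t j))"
        using s[unfolded tens_def]
      proof (induct rule: vspan.induct)
        case span_zero
        show ?case
          by (intro exI[of _ "\<lambda>_. vzero (rep1 M)"])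
            (simp add: sigma_simps vpow_simps MC_psi_zero vsp.sm_zero_right[OF MC_M1] vsp.zero_in[OF MC_M1])
      next
        case (span_gen x)
        then obtain a m where am: "a \<in> U" "m \<in> vcarrier ?K" "x = (\<lambda>i. vsmult ?K (a i) m)" by blast
        obtain k where k: "a = scl k b" using am(1) b(3) fv.span_singleton by blast
        have m: "m \<in> vcarrier (vpow r (rep1 M))" "psi r M m = vzero (rep2 M)"
          using am(2) by (simp_all add: sigma_simps)
        have mc: "\<And>j. m j \<in> vcarrier (rep1 M)" using vsp.vpow_mem_all[OF MC_M1 m(1)] .
        let ?t = "\<lambda>j. vsmult (rep1 M) k (m j)"
        have "?t = vsmult (vpow r (rep1 M)) k m" by (simp add: vpow_simps)
        hence "?t \<in> vcarrier (vpow r (rep1 M))" using vsp.sm_cl[OF vsp.vsp_vpow[OF MC_M1] m(1)] by simp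
        moreover have "psi r M ?t = vzero (rep2 M)" using MC_psi_sm[OF m(1)] m(2) vsp.sm_zero_right[OF MC_M2] by simp
        moreover have "x = (\<lambda>i j. vsmult (rep1 M) (b i) (?t j))"
          using am(3) k mc by (simp add: sigma_simps vsp.sm_assoc[OF MC_M1] mult.commute)
        ultimately show ?case by (intro exI[of _ ?t]) (simp add: sigma_simps)
      next
        case (span_add x y)
        then obtain t1 t2 where t1: "t1 \<in> vcarrier ?K" "x = (\<lambda>i j. vsmult (rep1 M) (b i) (t1 j))"
          and t2: "t2 \<in> vcarrier ?K" "y = (\<lambda>i j. vsmult (rep1 M) (b i) (t2 j))" by blast
        have m1: "t1 \<in> vcarrier (vpow r (rep1 M))" "psi r M t1 = vzero (rep2 M)"
          and m2: "t2 \<in> vcarrier (vpow r (rep1 M))" "psi r M t2 = vzero (rep2 M)"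
          using t1 t2 by (simp_all add: sigma_simps)
        have c1: "\<And>j. t1 j \<in> vcarrier (rep1 M)" using vsp.vpow_mem_all[OF MC_M1 m1(1)] .
        have c2: "\<And>j. t2 j \<in> vcarrier (rep1 M)" using vsp.vpow_mem_all[OF MC_M1 m2(1)] .
        let ?t = "\<lambda>j. vadd (rep1 M) (t1 j) (t2 j)"
        have "?t = vadd (vpow r (rep1 M)) t1 t2" by (simp add: vpow_simps)
        hence "?t \<in> vcarrier (vpow r (rep1 M))" using vsp.add_cl[OF vsp.vsp_vpow[OF MC_M1] m1(1) m2(1)] by simp
        moreover have "psi r M ?t = vzero (rep2 M)"
          using MC_psi_add[OF m1(1) m2(1)] m1(2) m2(2) vsp.zero_add[OF MC_M2 vsp.zero_in[OF MC_M2]] by simp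
        moreover have "vadd (vpow r ?K) x y = (\<lambda>i j. vsmult (rep1 M) (b i) (?t j))"
          using t1(2) t2(2) c1 c2 by (simp add: sigma_simps vpow_simps vsp.sm_rdist[OF MC_M1])
        ultimately show ?case by (intro exI[of _ ?t]) (simp add: sigma_simps)
      next
        case (span_smult x a)
        then obtain t1 where t1: "t1 \<in> vcarrier ?K" "x = (\<lambda>i j. vsmult (rep1 M) (b i) (t1 j))" by blast
        have m1: "t1 \<in> vcarrier (vpow r (rep1 M))" "psi r M t1 = vzero (rep2 M)"
          using t1 by (simp_all add: sigma_simps)
        have c1: "\<And>j. t1 j \<in> vcarrier (rep1 M)" using vsp.vpow_mem_all[OF MC_M1 m1(1)] .
        let ?t = "\<lambda>j. vsmult (rep1 M) a (t1 j)"
        have "?t = vsmult (vpow r (rep1 M)) a t1" by (simp add: vpow_simps)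
        hence "?t \<in> vcarrier (vpow r (rep1 M))" using vsp.sm_cl[OF vsp.vsp_vpow[OF MC_M1] m1(1)] by simp
        moreover have "psi r M ?t = vzero (rep2 M)" using MC_psi_sm[OF m1(1)] m1(2) vsp.sm_zero_right[OF MC_M2] by simp
        moreover have "vsmult (vpow r ?K) a x = (\<lambda>i j. vsmult (rep1 M) (b i) (?t j))"
          using t1(2) c1 by (simp add: sigma_simps vpow_simps vsp.sm_assoc[OF MC_M1] mult.commute)
        ultimately show ?case by (intro exI[of _ ?t]) (simp add: sigma_simps)
      qed
      then obtain t where t: "t \<in> vcarrier ?K" "s = (\<lambda>i j. vsmult (rep1 M) (b i) (t j))" by blast
      have tm: "t \<in> vcarrier (vpow r (rep1 M))" "psi r M t = vzero (rep2 M)"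
        using t by (simp_all add: sigma_simps)
      have tc: "\<And>i. t i \<in> vcarrier (rep1 M)" using vsp.vpow_mem_all[OF MC_M1 tm(1)] .
      have Bscl: "\<And>c a. Bf (rep1 M) r (scl c a) t = vsmult (rep1 M) c (Bf (rep1 M) r a t)"
        by (rule vsp.Bf_scl_left[OF MC_M1]) (rule tc)
      have Bb: "Bf (rep1 M) r b t = vzero (rep1 M)"
        using ps t(2) by (simp add: psiS Bf_def sigma_simps)
      have "\<forall>a\<in>U. Bf (rep1 M) r a t = vzero (rep1 M)"
      proof
        fix a assume "a \<in> U"
        then obtain k where "a = scl k b" using b(3) fv.span_singleton by blast
        thus "Bf (rep1 M) r a t = vzero (rep1 M)" using Bscl Bb vsp.sm_zero_right[OF MC_M1] by simp
      qed
      hence "t = (\<lambda>_. vzero (rep1 M))" using pw U tm by (auto simp: PW_def)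
      thus "s = vzero (vpow r ?K)" using t(2) Kz by (simp add: vsp.sm_zero_right[OF MC_M1])
    qed
  next
    assume ekp: "EKP r (sigma r M)"
    show "\<forall>W\<in>GrF r 1. PW r M W"
    proof (intro ballI, unfold PW_def, intro allI impI)
      fix W t assume W: "W \<in> GrF r 1" and t: "t \<in> vcarrier (vpow r (rep1 M))"
        and pt: "psi r M t = vzero (rep2 M)" and ort: "\<forall>a\<in>W. Bf (rep1 M) r a t = vzero (rep1 M)"
      obtain b where b: "b \<in> Sr r" "b \<noteq> 0" "W = fv.span {b}" using GrF1[OF W] by blast
      have bW: "b \<in> W" using b(3) fv.span_base by blast
      have tc: "\<And>i. t i \<in> vcarrier (rep1 M)" using vsp.vpow_mem_all[OF MC_M1 t] .
      define s where "s = (\<lambda>i j. vsmult (rep1 M) (b i) (t j))"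
      have tK: "t \<in> vcarrier ?K" using t pt by (simp add: sigma_simps)
      have "s \<in> tens r W (sigma r M)" unfolding tens_def
        by (rule vspan.span_gen) (use bW tK in \<open>auto simp: s_def sigma_simps\<close>)
      moreover have "psi r (sigma r M) s = vzero (rep2 (sigma r M))"
        using ort bW by (simp add: psiS s_def Bf_def sigma_simps)
      moreover have "W \<in> Gr (Ar r) 1" using W by (simp add: Gr_Ar)
      ultimately have "s = vzero (vpow r ?K)" using ekp by (auto simp: EKP_def rep_proj_def)
      hence s0: "\<And>i j. vsmult (rep1 M) (b i) (t j) = vzero (rep1 M)" using Kz by (simp add: s_def fun_eq_iff)
      obtain i where i: "b i \<noteq> 0" using b(2) by (auto simp: fun_eq_iff)
      show "t = (\<lambda>_. vzero (rep1 M))"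
        using vsp.sm_eq_zero[OF MC_M1 i tc s0] by (simp add: fun_eq_iff)
    qed
  qed
  with rp show ?thesis by simp
qed

end


lemma sigma_inv_simps:
  "rep1 (sigma_inv r M) = rep2 M"
  "rep2 (sigma_inv r M) = quot (vpow r (rep2 M)) (phi r M ` vcarrier (rep1 M))"
  "rmap (sigma_inv r M) i y = coset (vpow r (rep2 M)) (phi r M ` vcarrier (rep1 M)) (incl (rep2 M) i y)"
  by (simp_all add: sigma_inv_def)

context
  fixes r :: nat and M :: "('k::field, 'v, 'w) krep"
  assumes rep: "is_rep r M"
begin

lemmas MD_M1 = M1[OF rep] and MD_M2 = M2[OF rep]
lemmas MD_gam_cl = gam_cl[OF rep] and MD_gam_add = gam_add[OF rep] and MD_gam_sm = gam_sm[OF rep]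
  and MD_gam_zero = gam_zero[OF rep]

lemma phi_mem: "m \<in> vcarrier (rep1 M) \<Longrightarrow> phi r M m \<in> vcarrier (vpow r (rep2 M))"
  by (auto simp: phi_def vpow_simps MD_gam_cl)

lemma phi_zero: "phi r M (vzero (rep1 M)) = (\<lambda>_. vzero (rep2 M))"
  by (auto simp: phi_def fun_eq_iff MD_gam_zero)

lemma phi_sub: "subspace_of (vpow r (rep2 M)) (phi r M ` vcarrier (rep1 M))"
  unfolding subspace_of_def
proof (intro conjI ballI allI)
  show "phi r M ` vcarrier (rep1 M) \<subseteq> vcarrier (vpow r (rep2 M))" using phi_mem by blast
  show "vzero (vpow r (rep2 M)) \<in> phi r M ` vcarrier (rep1 M)"
  proof -
    have "vzero (vpow r (rep2 M)) = phi r M (vzero (rep1 M))" by (simp add: phi_zero vpow_simps)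
    thus ?thesis using vsp.zero_in[OF MD_M1] by (rule image_eqI)
  qed
next
  fix x y assume "x \<in> phi r M ` vcarrier (rep1 M)" "y \<in> phi r M ` vcarrier (rep1 M)"
  then obtain m m' where m: "m \<in> vcarrier (rep1 M)" "x = phi r M m" and m': "m' \<in> vcarrier (rep1 M)" "y = phi r M m'"
    by auto
  have "vadd (vpow r (rep2 M)) x y = phi r M (vadd (rep1 M) m m')"
    using m m' by (auto simp: vpow_simps phi_def fun_eq_iff MD_gam_add vsp.zero_add[OF MD_M2] vsp.zero_in[OF MD_M2])
  thus "vadd (vpow r (rep2 M)) x y \<in> phi r M ` vcarrier (rep1 M)"
    using m m' vsp.add_cl[OF MD_M1] by blast
next
  fix a x assume "x \<in> phi r M ` vcarrier (rep1 M)"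
  then obtain m where m: "m \<in> vcarrier (rep1 M)" "x = phi r M m" by auto
  have "vsmult (vpow r (rep2 M)) a x = phi r M (vsmult (rep1 M) a m)"
    using m by (auto simp: vpow_simps phi_def fun_eq_iff MD_gam_sm vsp.sm_zero_right[OF MD_M2])
  thus "vsmult (vpow r (rep2 M)) a x \<in> phi r M ` vcarrier (rep1 M)"
    using m vsp.sm_cl[OF MD_M1] by blast
qed

lemma psiN:
  assumes t: "t \<in> vcarrier (vpow r (rep2 M))"
  shows "psi r (sigma_inv r M) t = coset (vpow r (rep2 M)) (phi r M ` vcarrier (rep1 M)) t"
proof -
  let ?V = "vpow r (rep2 M)" and ?P = "phi r M ` vcarrier (rep1 M)"
  have V: "vsp ?V" by (rule vsp.vsp_vpow[OF MD_M2])
  have tc: "\<And>i. t i \<in> vcarrier (rep2 M)" using vsp.vpow_mem_all[OF MD_M2 t] .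
  have claim: "n \<le> r \<Longrightarrow> vsum (quot ?V ?P) (\<lambda>i. coset ?V ?P (incl (rep2 M) i (t i))) n
      = coset ?V ?P (\<lambda>j. if j < n then t j else vzero (rep2 M))" for n
  proof (induct n)
    case 0 thus ?case by (simp add: vsp.quot_simps[OF V] vpow_simps)
  next
    case (Suc n)
    have A: "(\<lambda>j. if j < n then t j else vzero (rep2 M)) \<in> vcarrier ?V"
      using Suc.prems tc by (auto simp: vpow_simps vsp.zero_in[OF MD_M2])
    have I: "incl (rep2 M) n (t n) \<in> vcarrier ?V"
      using Suc.prems tc by (auto simp: vpow_simps incl_def vsp.zero_in[OF MD_M2])
    have e: "vadd ?V (\<lambda>j. if j < n then t j else vzero (rep2 M)) (incl (rep2 M) n (t n))
        = (\<lambda>j. if j < Suc n then t j else vzero (rep2 M))"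
      using tc by (auto simp: vpow_simps incl_def fun_eq_iff vsp.zero_add[OF MD_M2] vsp.add_zero[OF MD_M2] vsp.zero_in[OF MD_M2])
    show ?case using Suc vsp.quot_add[OF V phi_sub A I] e by simp
  qed
  have "(\<lambda>j. if j < r then t j else vzero (rep2 M)) = t" using t by (auto simp: vpow_simps fun_eq_iff)
  thus ?thesis using claim[of r] by (simp add: psi_def sigma_inv_simps)
qed

lemma part3:
  assumes rp: "rep_proj r d M" and d: "1 \<le> d" "d \<le> r" and e: "e < r"
  shows "rep_proj r e (sigma_inv r M)"
  unfolding rep_proj_def Gr_Ar
proof (intro ballI impI)
  let ?V = "vpow r (rep2 M)" and ?P = "phi r M ` vcarrier (rep1 M)"
  have V: "vsp ?V" by (rule vsp.vsp_vpow[OF MD_M2])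
  fix U t assume U: "U \<in> GrF r e" and t: "t \<in> tens r U (sigma_inv r M)"
    and pt: "psi r (sigma_inv r M) t = vzero (rep2 (sigma_inv r M))"
  obtain B where B: "finite B" "card B = e" "B \<subseteq> U" "fv.span B = U" "U \<subseteq> Sr r"
    using U by (auto simp: GrF_def)
  have cB: "card B < r" using B(2) e by simp
  have BS: "B \<subseteq> Sr r" using B(3,5) by blast
  obtain a where a: "a \<in> Sr r" "a \<noteq> 0" "\<forall>x\<in>fv.span B. dot r a x = 0"
    using LA1[OF B(1) cB BS] by blast
  have o: "t \<in> vcarrier ?V \<and> Bf (rep2 M) r a t = vzero (rep2 M)"
    by (rule vsp.orth[OF MD_M2 B(5)]) (use a B t in \<open>auto simp: tens_def sigma_inv_simps\<close>)
  have "coset ?V ?P t = coset ?V ?P (vzero ?V)"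
    using pt psiN o by (simp add: sigma_inv_simps vsp.quot_simps[OF V])
  hence "t \<in> ?P" using vsp.coset_zero_iff[OF V phi_sub] o by blast
  then obtain m where m: "m \<in> vcarrier (rep1 M)" "t = phi r M m" by auto
  have "Bf (rep2 M) r a t = vsum (rep2 M) (\<lambda>i. rmap M i (vsmult (rep1 M) (a i) m)) r"
    unfolding Bf_def using m by (intro vsp.vsum_cong[OF MD_M2]) (simp add: phi_def MD_gam_sm)
  hence ps: "psi r M (\<lambda>i. vsmult (rep1 M) (a i) m) = vzero (rep2 M)" using o by (simp add: psi_def)
  obtain U' where U': "U' \<in> GrF r d" "a \<in> U'" using LA2[OF a(1,2) d] by blast
  have "(\<lambda>i. vsmult (rep1 M) (a i) m) \<in> tens r U' M"
    unfolding tens_def by (rule vspan.span_gen) (use U' m in auto)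
  hence "(\<lambda>i. vsmult (rep1 M) (a i) m) = vzero (vpow r (rep1 M))"
    using rp U' ps by (auto simp: rep_proj_def Gr_Ar)
  hence z: "\<And>i. vsmult (rep1 M) (a i) m = vzero (rep1 M)" by (simp add: vpow_simps fun_eq_iff)
  obtain i where i: "a i \<noteq> 0" using a(2) by (auto simp: fun_eq_iff)
  have "m = vzero (rep1 M)" by (rule vsp.sm_eq_zero[OF MD_M1 i m(1) z])
  thus "t = vzero (vpow r (rep1 (sigma_inv r M)))"
    using m(2) phi_zero by (simp add: vpow_simps sigma_inv_simps)
qed

end


theorem theorem2p2p3:
  fixes r d :: nat and M :: "('k::field, 'v, 'w) krep"
  assumes "alg_closed TYPE('k)"
    and "2 \<le> r" and "1 \<le> d" and "d < r"
    and "is_rep r M"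
  shows "(rep_proj r d M \<longleftrightarrow> (\<forall>W\<in>Gr (Ar r) (r - d). hom_zero r (Cw r W) (sigma r M)))
       \<and> (rep_proj r (r - 1) M \<longleftrightarrow> EKP r (sigma r M))
       \<and> (rep_proj r d M \<longrightarrow> rep_proj r (r - 1) (sigma_inv r M) \<and> rep_proj r d (sigma_inv r M))"
proof (intro conjI impI)
  note rep = assms(5)
  have dr: "d \<le> r" using assms(4) by simp
  have hz: "hom_zero r (Cw r W) (sigma r M) \<longleftrightarrow> PW r M W" if W: "W \<in> GrF r (r - d)" for W
    using hom_iff[OF rep, of W] W by (simp add: GrF_def)
  show "rep_proj r d M \<longleftrightarrow> (\<forall>W\<in>Gr (Ar r) (r - d). hom_zero r (Cw r W) (sigma r M))"
    unfolding Gr_Ar repproj_iff[OF rep dr] using hz by blast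
  show "rep_proj r (r - 1) M \<longleftrightarrow> EKP r (sigma r M)"
    using ekp_iff[OF rep] assms(2) by simp
  assume rp: "rep_proj r d M"
  show "rep_proj r (r - 1) (sigma_inv r M)"
    using part3[OF rep rp assms(3) dr] assms(2) by simp
  show "rep_proj r d (sigma_inv r M)"
    using part3[OF rep rp assms(3) dr] assms(4) by simp
qed

end
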